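(* Let $f:\mathbb{B}\to\mathbb{H}$ be regular and $p\in(0,+\infty]$. Then $f\in H^p(\mathbb{B})$ if and only if there exists $J\in\mathbb{S}$ with $\|f_J\|_p<+\infty$. Moreover, if $\|f_J\|_p<+\infty$ for some $J\in\mathbb{S}$, then $\|f_J\|_p\le\|f\|_p\le 2^{1/p}\|f_J\|_p$ if $p\in(0,1)$, and $\|f_J\|_p\le\|f\|_p\le 2\|f_J\|_p$ if $p\in[1,+\infty]$.
   Context: $\mathbb{H}$ denotes the quaternions; $\mathbb{S}=\{q\in\mathbb{H}: q^2=-1\}$; for $I\in\mathbb{S}$, $L_I=\mathbb{R}+\mathbb{R}I$; $\mathbb{B}=\{q\in\mathbb{H}:|q|<1\}$; $\mathbb{B}_I=\mathbb{B}\cap L_I$; $e^{I\theta}=\cos\theta+I\sin\theta$. A function $f:\mathbb{B}\to\mathbb{H}$ is (slice) regular if for every $I\in\mathbb{S}$ its restriction $f_I=f|_{\mathbb{B}_I}$ has continuous partial derivatives and satisfies $\frac12(\partial_x+I\partial_y)f_I(x+yI)=0$ on $\mathbb{B}_I$; equivalently, $f(q)=\sum_{n\ge0}q^na_n$ with $a_n\in\mathbb{H}$, convergent on $\mathbb{B}$. Hardy norms: for $p\in(0,\infty)$, $M_p(f_I,r)=\left(\frac{1}{2\pi}\int_{-\pi}^{\pi}|f(re^{I\theta})|^pd\theta\right)^{1/p}$ (nondecreasing in $r\in[0,1)$), $\|f_I\|_p=\lim_{r\to1^-}M_p(f_I,r)\in[0,\infty]$, $\|f\|_p=\sup_{I\in\mathbb{S}}\|f_I\|_p$;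 for $p=\infty$, $\|f_I\|_\infty=\sup_{z\in\mathbb{B}_I}|f(z)|$ and $\|f\|_\infty=\sup_{q\in\mathbb{B}}|f(q)|$. $H^p(\mathbb{B})=\{f:\mathbb{B}\to\mathbb{H}\text{ regular}: \|f\|_p<+\infty\}$. *)

theory Defs
  imports "HOL-Analysis.Analysis"
begin

type_synonym quat = "real^4"

definition qmk :: "real \<Rightarrow> real \<Rightarrow> real \<Rightarrow> real \<Rightarrow> quat" where
  "qmk a b c d = vector [a, b, c, d]"

definition qmult :: "quat \<Rightarrow> quat \<Rightarrow> quat" where
  "qmult p q = (let a1 = p$1; b1 = p$2; c1 = p$3; d1 = p$4;
                    a2 = q$1; b2 = q$2; c2 = q$3; d2 = q$4 in
     qmk (a1*a2 - b1*b2 - c1*c2 - d1*d2)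
         (a1*b2 + b1*a2 + c1*d2 - d1*c2)
         (a1*c2 - b1*d2 + c1*a2 + d1*b2)
         (a1*d2 + b1*c2 - c1*b2 + d1*a2))"

definition qone :: quat where "qone = qmk 1 0 0 0"

definition qpow :: "quat \<Rightarrow> nat \<Rightarrow> quat" where
  "qpow q n = (qmult q ^^ n) qone"

text \<open>The modulus |q| of a quaternion is the Euclidean norm on real^4.\<close>

definition qsphere :: "quat set" where
  "qsphere = {q. qmult q q = - qone}"

definition qball :: "quat set" where
  "qball = {q. norm q < 1}"

definition qslice :: "quat \<Rightarrow> quat set" where
  "qslice I = {x *\<^sub>R qone + y *\<^sub>R I | x y. True}"

definition qexp_slice :: "quat \<Rightarrow> real \<Rightarrow> quat" where
  "qexp_slice I \<theta> = cos \<theta> *\<^sub>R qone + sin \<theta> *\<^sub>R I"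

text \<open>Slice regular functions on the unit ball, via the power series characterization
  f(q) = sum q^n a_n (convergent on the ball).\<close>

definition slice_regular :: "(quat \<Rightarrow> quat) \<Rightarrow> bool" where
  "slice_regular f \<longleftrightarrow> (\<exists>a :: nat \<Rightarrow> quat. \<forall>q \<in> qball. (\<lambda>n. qmult (qpow q n) (a n)) sums f q)"

definition Mp :: "real \<Rightarrow> (quat \<Rightarrow> quat) \<Rightarrow> quat \<Rightarrow> real \<Rightarrow> real" where
  "Mp p f I r = ((1 / (2 * pi)) * integral {-pi..pi} (\<lambda>\<theta>. norm (f (r *\<^sub>R qexp_slice I \<theta>)) powr p))
                 powr (1 / p)"

definition slice_hardy_norm :: "ereal \<Rightarrow> (quat \<Rightarrow> quat) \<Rightarrow> quat \<Rightarrow> ereal" where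
  "slice_hardy_norm p f I =
     (if p = \<infinity> then (SUP z \<in> qball \<inter> qslice I. ereal (norm (f z)))
      else Lim (at_left (1::real)) (\<lambda>r. ereal (Mp (real_of_ereal p) f I r)))"

definition hardy_norm :: "ereal \<Rightarrow> (quat \<Rightarrow> quat) \<Rightarrow> ereal" where
  "hardy_norm p f =
     (if p = \<infinity> then (SUP q \<in> qball. ereal (norm (f q)))
      else (SUP I \<in> qsphere. slice_hardy_norm p f I))"

definition hardy_space :: "ereal \<Rightarrow> (quat \<Rightarrow> quat) set" where
  "hardy_space p = {f. slice_regular f \<and> hardy_norm p f < \<infinity>}"

end

theory Submission
  imports Defs
begin


lemma qmk_nth [simp]:
  "qmk a b c d $ 1 = a" "qmk a b c d $ 2 = b" "qmk a b c d $ 3 = c" "qmk a b c d $ 4 = d"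
  by (simp_all add: qmk_def vector_def)

lemma quat_eq_iff: "(p::quat) = q \<longleftrightarrow> p$1 = q$1 \<and> p$2 = q$2 \<and> p$3 = q$3 \<and> p$4 = q$4"
  by (auto simp: vec_eq_iff forall_4)

lemma qmult_nth:
  "qmult p q $ 1 = p$1*q$1 - p$2*q$2 - p$3*q$3 - p$4*q$4"
  "qmult p q $ 2 = p$1*q$2 + p$2*q$1 + p$3*q$4 - p$4*q$3"
  "qmult p q $ 3 = p$1*q$3 - p$2*q$4 + p$3*q$1 + p$4*q$2"
  "qmult p q $ 4 = p$1*q$4 + p$2*q$3 - p$3*q$2 + p$4*q$1"
  by (simp_all add: qmult_def Let_def)

lemma qone_nth [simp]: "qone$1 = 1" "qone$2 = 0" "qone$3 = 0" "qone$4 = 0"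
  by (simp_all add: qone_def)

lemma norm_quat: "norm (q::quat) = sqrt (q$1^2 + q$2^2 + q$3^2 + q$4^2)"
  by (simp add: norm_vec_def L2_set_def sum_4)

lemma inner_quat: "inner (p::quat) q = p$1*q$1 + p$2*q$2 + p$3*q$3 + p$4*q$4"
  by (simp add: inner_vec_def sum_4)



lemma qmult_assoc: "qmult (qmult p q) r = qmult p (qmult q r)"
  unfolding quat_eq_iff qmult_nth by (intro conjI; algebra)
lemma norm_qmult: "norm (qmult p q) = norm p * norm q"
proof -
  have "(qmult p q$1)^2 + (qmult p q$2)^2 + (qmult p q$3)^2 + (qmult p q$4)^2 =
     (p$1^2 + p$2^2 + p$3^2 + p$4^2) * (q$1^2 + q$2^2 + q$3^2 + q$4^2)"
    unfolding qmult_nth by algebra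
  then show ?thesis by (simp add: norm_quat real_sqrt_mult)
qed

lemma qmult_one_left [simp]: "qmult qone q = q" and qmult_one_right [simp]: "qmult q qone = q"
  by (simp_all add: quat_eq_iff qmult_nth)

lemma qmult_add_left: "qmult (p + q) r = qmult p r + qmult q r"
  and qmult_add_right: "qmult r (p + q) = qmult r p + qmult r q"
  and qmult_scaleR_left: "qmult (c *\<^sub>R p) q = c *\<^sub>R qmult p q"
  and qmult_scaleR_right: "qmult p (c *\<^sub>R q) = c *\<^sub>R qmult p q"
  and qmult_minus_left: "qmult (- p) q = - qmult p q"
  and qmult_minus_right: "qmult p (- q) = - qmult p q"
  and qmult_diff_left: "qmult (p - q) r = qmult p r - qmult q r"
  and qmult_diff_right: "qmult r (p - q) = qmult r p - qmult r q"
  by (simp_all add: quat_eq_iff qmult_nth algebra_simps)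

lemma qmult_zero [simp]: "qmult 0 q = 0" "qmult q 0 = 0"
  by (simp_all add: quat_eq_iff qmult_nth)

lemma bounded_linear_qmult_right: "bounded_linear (qmult p)"
proof -
  have "linear (qmult p)" by (rule linearI) (simp_all add: qmult_add_right qmult_scaleR_right)
  then show ?thesis by (simp add: linear_conv_bounded_linear)
qed

lemma bounded_linear_qmult_left: "bounded_linear (\<lambda>q. qmult q p)"
proof -
  have "linear (\<lambda>q. qmult q p)" by (rule linearI) (simp_all add: qmult_add_left qmult_scaleR_left)
  then show ?thesis by (simp add: linear_conv_bounded_linear)
qed

lemma qsphere_iff: "I \<in> qsphere \<longleftrightarrow> I$1 = 0 \<and> norm I = 1"
proof
  assume "I \<in> qsphere"
  then have e: "qmult I I = - qone" by (simp add: qsphere_def)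
  have c: "qmult I I $ k = - qone $ k" for k using e by simp
  from c[of 1] have e1: "I$1*I$1 - I$2*I$2 - I$3*I$3 - I$4*I$4 = -1"
    by (simp add: qmult_nth)
  from c[of 2] c[of 3] c[of 4] have "2*I$1*I$2 = 0" "2*I$1*I$3 = 0" "2*I$1*I$4 = 0"
    by (simp_all add: qmult_nth algebra_simps)
  show "I$1 = 0 \<and> norm I = 1"
  proof (cases "I$1 = 0")
    case True
    then show ?thesis using e1 by (simp add: norm_quat power2_eq_square algebra_simps)
  next
    case False
    then have "I$2 = 0" "I$3 = 0" "I$4 = 0" using \<open>2*I$1*I$2 = 0\<close> \<open>2*I$1*I$3 = 0\<close> \<open>2*I$1*I$4 = 0\<close> by auto
    then have "I$1*I$1 = -1" using e1 by simp
    then show ?thesis by (smt (verit) zero_le_square)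
  qed
next
  assume a: "I$1 = 0 \<and> norm I = 1"
  have h1: "I$1 = 0" and h2: "norm I = 1" using a by auto
  have "I$1^2 + I$2^2 + I$3^2 + I$4^2 = 1" using h2 by (simp add: norm_quat)
  then have "I$2^2 + I$3^2 + I$4^2 = 1" using h1 by simp
  then show "I \<in> qsphere" using a
    by (simp add: qsphere_def quat_eq_iff qmult_nth power2_eq_square algebra_simps)
qed


definition cq :: "quat \<Rightarrow> complex \<Rightarrow> quat" where
  "cq I z = Re z *\<^sub>R qone + Im z *\<^sub>R I"

lemma cq_nth: "cq I z $ k = Re z * qone $ k + Im z * I $ k"
  by (simp add: cq_def)

lemma qsphere_I: assumes "I \<in> qsphere"
  shows "I$1 = 0" "I$2^2 + I$3^2 + I$4^2 = 1" "qmult I I = - qone"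
proof -
  show "I$1 = 0" using assms qsphere_iff by auto
  moreover have "norm I = 1" using assms qsphere_iff by auto
  ultimately show "I$2^2 + I$3^2 + I$4^2 = 1" by (simp add: norm_quat)
  show "qmult I I = - qone" using assms by (simp add: qsphere_def)
qed

lemma cq_mult: assumes "I \<in> qsphere" shows "qmult (cq I z) (cq I w) = cq I (z * w)"
  using qsphere_I(3)[OF assms]
  by (simp add: cq_def qmult_add_left qmult_add_right qmult_scaleR_left qmult_scaleR_right
      qmult_minus_right algebra_simps)

lemma qpow_cq: assumes "I \<in> qsphere" shows "qpow (cq I z) n = cq I (z ^ n)"
proof (induction n)
  case 0 then show ?case by (simp add: qpow_def cq_def)
next
  case (Suc n)
  have "qpow (cq I z) (Suc n) = qmult (cq I z) (qpow (cq I z) n)" by (simp add: qpow_def)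
  then show ?case using Suc by (simp add: cq_mult[OF assms])
qed

lemma norm_cq: assumes "I \<in> qsphere" shows "norm (cq I z) = cmod z"
proof -
  have "(cq I z$1)^2 + (cq I z$2)^2 + (cq I z$3)^2 + (cq I z$4)^2 = (Re z)^2 + (Im z)^2 * (I$2^2 + I$3^2 + I$4^2)"
    using qsphere_I(1)[OF assms] by (simp add: cq_nth power2_eq_square algebra_simps)
  then show ?thesis using qsphere_I(2)[OF assms] by (simp add: norm_quat cmod_def)
qed

lemma qexp_cq: "r *\<^sub>R qexp_slice I \<theta> = cq I (of_real r * cis \<theta>)"
  by (simp add: qexp_slice_def cq_def scaleR_add_right)

lemma qmult_cq_left: "qmult (cq I w) a = Re w *\<^sub>R a + Im w *\<^sub>R qmult I a"
  by (simp add: cq_def qmult_add_left qmult_scaleR_left)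

lemma qslice_cq: "qslice I = range (cq I)"
proof -
  have "x *\<^sub>R qone + y *\<^sub>R I = cq I (Complex x y)" for x y by (simp add: cq_def)
  moreover have "cq I z = Re z *\<^sub>R qone + Im z *\<^sub>R I" for z by (simp add: cq_def)
  ultimately show ?thesis unfolding qslice_def by (auto simp: image_iff) (metis complex.sel)
qed

lemma e2_qsphere: "qmk 0 1 0 0 \<in> qsphere"
  by (simp add: qsphere_iff norm_quat)

lemma quat_decomp: "\<exists>I\<in>qsphere. \<exists>z. q = cq I z"
proof (cases "q$2 = 0 \<and> q$3 = 0 \<and> q$4 = 0")
  case True
  then have "q = cq (qmk 0 1 0 0) (of_real (q$1))" by (simp add: quat_eq_iff cq_nth)
  then show ?thesis using e2_qsphere by blast
next
  case False
  define v where "v = sqrt (q$2^2 + q$3^2 + q$4^2)"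
  have "q$2^2 + q$3^2 + q$4^2 > 0" using False by (auto simp: add_pos_nonneg sum_power2_gt_zero_iff)
    (smt (verit) not_sum_power2_lt_zero power2_less_eq_zero_iff)
  then have vpos: "v > 0" by (simp add: v_def)
  have v2: "v^2 = q$2^2 + q$3^2 + q$4^2" using vpos by (simp add: v_def)
  define I where "I = qmk 0 (q$2/v) (q$3/v) (q$4/v)"
  have "(q$2/v)^2 + (q$3/v)^2 + (q$4/v)^2 = 1" using v2 vpos by (simp add: power_divide add_divide_distrib[symmetric]) (metis v2 vpos power_eq_0_iff less_irrefl)
  then have "I \<in> qsphere" by (simp add: I_def qsphere_iff norm_quat)
  moreover have "q = cq I (Complex (q$1) v)" using vpos by (simp add: quat_eq_iff cq_nth I_def)
  ultimately show ?thesis by blast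
qed


lemma half_sum: "(1/2::real) *\<^sub>R ((x + y) + (x - y)) = (x::'a::real_vector)"
proof -
  have "(x + y) + (x - y) = (2::real) *\<^sub>R x" by (simp add: scaleR_2)
  then show ?thesis by simp
qed

lemma twice_diff: "(x + y) - (x - y) = (2::real) *\<^sub>R (y::'a::real_vector)"
  by (simp add: scaleR_2)

lemma series_slice:
  assumes ha: "\<forall>q\<in>qball. (\<lambda>n. qmult (qpow q n) (a n)) sums f q"
    and I: "I \<in> qsphere" and z: "cmod z < 1"
  shows "(\<lambda>n. Re (z^n) *\<^sub>R a n + Im (z^n) *\<^sub>R qmult I (a n)) sums f (cq I z)"
proof -
  have "cq I z \<in> qball" using z norm_cq[OF I] by (simp add: qball_def)
  then have "(\<lambda>n. qmult (qpow (cq I z) n) (a n)) sums f (cq I z)" using ha by blast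
  then show ?thesis by (simp add: qpow_cq[OF I] qmult_cq_left)
qed

lemma repr_bound:
  assumes ha: "\<forall>q\<in>qball. (\<lambda>n. qmult (qpow q n) (a n)) sums f q"
    and I: "I \<in> qsphere" and J: "J \<in> qsphere" and z: "cmod z < 1"
  shows "norm (f (cq I z)) \<le> norm (f (cq J z)) + norm (f (cq J (cnj z)))"
proof -
  define Fp where "Fp = f (cq J z)"
  define Fm where "Fm = f (cq J (cnj z))"
  have s1: "(\<lambda>n. Re (z^n) *\<^sub>R a n + Im (z^n) *\<^sub>R qmult J (a n)) sums Fp"
    unfolding Fp_def by (rule series_slice[OF ha J z])
  have s2: "(\<lambda>n. Re (z^n) *\<^sub>R a n - Im (z^n) *\<^sub>R qmult J (a n)) sums Fm"
  proof -
    have r: "Re (cnj z ^ n) = Re (z^n)" "Im (cnj z ^ n) = - Im (z^n)" for n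
      by (subst complex_cnj_power[symmetric], simp del: complex_cnj_power)+
    show ?thesis using series_slice[OF ha J, of "cnj z"] z unfolding Fm_def r by simp
  qed
  have sA: "(\<lambda>n. Re (z^n) *\<^sub>R a n) sums ((1/2) *\<^sub>R (Fp + Fm))"
    using sums_scaleR_right[OF sums_add[OF s1 s2], of "1/2"] by (simp only: half_sum)
  have sd: "(\<lambda>n. (2 * Im (z^n)) *\<^sub>R qmult J (a n)) sums (Fp - Fm)"
    using sums_diff[OF s1 s2] by (simp only: twice_diff scaleR_scaleR)
  have JJ: "qmult (- J) (qmult J x) = x" for x
    using qsphere_I(3)[OF J] by (simp add: qmult_assoc[symmetric] qmult_minus_left)
  have "(\<lambda>n. qmult I ((1/2) *\<^sub>R qmult (- J) ((2 * Im (z^n)) *\<^sub>R qmult J (a n)))) sums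
        qmult I ((1/2) *\<^sub>R qmult (- J) (Fp - Fm))"
    by (intro bounded_linear.sums[OF bounded_linear_qmult_right] sums_scaleR_right
        bounded_linear.sums[OF bounded_linear_qmult_right] sd)
  then have sB: "(\<lambda>n. Im (z^n) *\<^sub>R qmult I (a n)) sums qmult I ((1/2) *\<^sub>R qmult (- J) (Fp - Fm))"
    by (simp add: qmult_scaleR_right JJ)
  have "(\<lambda>n. Re (z^n) *\<^sub>R a n + Im (z^n) *\<^sub>R qmult I (a n)) sums
      ((1/2) *\<^sub>R (Fp + Fm) + qmult I ((1/2) *\<^sub>R qmult (- J) (Fp - Fm)))"
    by (rule sums_add[OF sA sB])
  then have eq: "f (cq I z) = (1/2) *\<^sub>R (Fp + Fm) + qmult I ((1/2) *\<^sub>R qmult (- J) (Fp - Fm))"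
    using series_slice[OF ha I z] sums_unique2 by blast
  have nI: "norm I = 1" and nJ: "norm J = 1" using I J qsphere_iff by auto
  have "norm (f (cq I z)) \<le> norm ((1/2) *\<^sub>R (Fp + Fm)) + norm (qmult I ((1/2) *\<^sub>R qmult (- J) (Fp - Fm)))"
    unfolding eq by (rule norm_triangle_ineq)
  also have "\<dots> = (1/2) * norm (Fp + Fm) + (1/2) * norm (Fp - Fm)"
    by (simp add: norm_qmult nI nJ)
  also have "\<dots> \<le> (1/2) * (norm Fp + norm Fm) + (1/2) * (norm Fp + norm Fm)"
    by (intro add_mono mult_left_mono norm_triangle_ineq norm_triangle_ineq4) auto
  finally show ?thesis unfolding Fp_def Fm_def by simp
qed


lemma powr_subadd:
  fixes a b p :: real
  assumes "0 < p" "p \<le> 1" "0 \<le> a" "0 \<le> b"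
  shows "(a + b) powr p \<le> a powr p + b powr p"
proof (cases "a + b = 0")
  case True then show ?thesis using assms by simp
next
  case False
  define s where "s = a + b"
  have s: "s > 0" using False assms by (simp add: s_def)
  have key: "x / s \<le> (x / s) powr p" if "0 \<le> x" "x \<le> s" for x
  proof (cases "x = 0")
    case True then show ?thesis by simp
  next
    case False
    have "(x/s) powr 1 \<le> (x/s) powr p"
      using that s False assms by (intro powr_mono') (auto simp: field_simps)
    then show ?thesis using that s by simp
  qed
  have "a/s + b/s = 1" using s by (simp add: s_def add_divide_distrib[symmetric])
  then have "1 \<le> (a/s) powr p + (b/s) powr p"
    using key[of a] key[of b] assms s by (simp add: s_def)
  then have "s powr p * 1 \<le> s powr p * ((a/s) powr p + (b/s) powr p)"
    by (intro mult_left_mono) auto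
  also have "\<dots> = a powr p + b powr p"
    using s assms by (simp add: distrib_left powr_divide)
  finally show ?thesis by (simp add: s_def)
qed

lemma powr_convex_sum:
  fixes a b p :: real
  assumes "1 \<le> p" "0 \<le> a" "0 \<le> b"
  shows "(a + b) powr p \<le> 2 powr (p - 1) * (a powr p + b powr p)"
proof -
  have c: "((a + b)/2) powr p \<le> (a powr p + b powr p) / 2"
  proof (cases "a = 0 \<or> b = 0")
    case True
    have h: "(x/2) powr p \<le> x powr p / 2" if "0 \<le> x" for x
    proof -
      have "(x/2) powr p = x powr p / 2 powr p" using that by (simp add: powr_divide)
      also have "\<dots> \<le> x powr p / 2"
      proof (intro divide_left_mono)
        show "2 \<le> 2 powr p" using powr_mono[of 1 p 2] assms by simp
      qed (use that in auto)
      finally show ?thesis .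
    qed
    show ?thesis using True h[of a] h[of b] assms by auto
  next
    case False
    then have "a > 0" "b > 0" using assms by auto
    then show ?thesis
      using convex_onD[OF powr_convex[OF assms(1)], of "1/2" a b]
      by (simp add: field_simps)
  qed
  have "(a + b) powr p = 2 powr p * ((a + b)/2) powr p"
    using assms by (simp add: powr_divide)
  also have "\<dots> \<le> 2 powr p * ((a powr p + b powr p) / 2)"
    using c by (intro mult_left_mono) auto
  also have "\<dots> = 2 powr (p - 1) * (a powr p + b powr p)"
    by (simp add: powr_diff)
  finally show ?thesis .
qed

lemma cont_circle:
  assumes cont: "continuous_on (ball 0 1) (\<lambda>z. f (cq I z))" and r: "\<bar>r\<bar> < 1" and p: "0 < p0"
  shows "continuous_on S (\<lambda>\<theta>. norm (f (cq I (of_real r * cis \<theta>))) powr p0)"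
proof -
  have "continuous_on S (\<lambda>\<theta>. f (cq I (of_real r * cis \<theta>)))"
    by (rule continuous_on_compose2[OF cont, where f="\<lambda>\<theta>. of_real r * cis \<theta>"])
       (auto intro!: continuous_intros simp: norm_mult r)
  then show ?thesis using p
    by (intro continuous_on_powr' continuous_intros) auto
qed

lemma int_bound:
  assumes ha: "\<forall>q\<in>qball. (\<lambda>n. qmult (qpow q n) (a n)) sums f q"
    and I: "I \<in> qsphere" and J: "J \<in> qsphere" and r: "\<bar>r\<bar> < 1" and p: "0 < p0"
    and cont: "continuous_on (ball 0 1) (\<lambda>z. f (cq J z))"
    and contI: "continuous_on (ball 0 1) (\<lambda>z. f (cq I z))"
  shows "integral {-pi..pi} (\<lambda>\<theta>. norm (f (cq I (of_real r * cis \<theta>))) powr p0)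
     \<le> (if p0 < 1 then 2 else 2 powr p0) * integral {-pi..pi} (\<lambda>\<theta>. norm (f (cq J (of_real r * cis \<theta>))) powr p0)"
proof -
  define A where "A \<theta> = norm (f (cq J (of_real r * cis \<theta>)))" for \<theta>
  define Kh where "Kh = (if p0 < 1 then 1 else 2 powr (p0 - 1))"
  have Kh: "Kh \<ge> 0" by (simp add: Kh_def)
  have cA: "continuous_on S (\<lambda>\<theta>. A \<theta> powr p0)" for S
    unfolding A_def by (rule cont_circle[OF cont r p])
  have cAm: "continuous_on S (\<lambda>\<theta>. A (- \<theta>) powr p0)" for S
  proof -
    have "continuous_on S (\<lambda>\<theta>::real. -\<theta>)" by (intro continuous_intros)
    from continuous_on_compose2[OF cA[of UNIV] this] show ?thesis by simp
  qed
  have pt: "norm (f (cq I (of_real r * cis \<theta>))) powr p0 \<le> Kh * (A \<theta> powr p0 + A (-\<theta>) powr p0)" for \<theta>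
  proof -
    have z: "cmod (of_real r * cis \<theta>) < 1" using r by (simp add: norm_mult)
    have cn: "cnj (of_real r * cis \<theta>) = of_real r * cis (-\<theta>)" by (simp add: cis_cnj)
    have "norm (f (cq I (of_real r * cis \<theta>))) \<le> A \<theta> + A (-\<theta>)"
      using repr_bound[OF ha I J z] unfolding A_def cn .
    then have "norm (f (cq I (of_real r * cis \<theta>))) powr p0 \<le> (A \<theta> + A (-\<theta>)) powr p0"
      using p by (intro powr_mono2) auto
    also have "\<dots> \<le> Kh * (A \<theta> powr p0 + A (-\<theta>) powr p0)"
    proof (cases "p0 < 1")
      case True then show ?thesis using powr_subadd[of p0 "A \<theta>" "A (-\<theta>)"] p by (simp add: Kh_def A_def)
    next
      case False then show ?thesis using powr_convex_sum[of p0 "A \<theta>" "A (-\<theta>)"] by (simp add: Kh_def A_def)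
    qed
    finally show ?thesis .
  qed
  have "integral {-pi..pi} (\<lambda>\<theta>. norm (f (cq I (of_real r * cis \<theta>))) powr p0)
      \<le> integral {-pi..pi} (\<lambda>\<theta>. Kh * (A \<theta> powr p0 + A (-\<theta>) powr p0))"
  proof (rule integral_le)
    show "(\<lambda>\<theta>. norm (f (cq I (of_real r * cis \<theta>))) powr p0) integrable_on {-pi..pi}"
      by (rule integrable_continuous_real, rule cont_circle[OF contI r p])
    show "(\<lambda>\<theta>. Kh * (A \<theta> powr p0 + A (-\<theta>) powr p0)) integrable_on {-pi..pi}"
      by (intro integrable_continuous_real continuous_intros cA cAm)
  qed (rule pt)
  also have "\<dots> = Kh * (integral {-pi..pi} (\<lambda>\<theta>. A \<theta> powr p0) + integral {-pi..pi} (\<lambda>\<theta>. A (-\<theta>) powr p0))"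
    by (simp add: integral_add integrable_continuous_real cA cAm)
  also have "integral {-pi..pi} (\<lambda>\<theta>. A (-\<theta>) powr p0) = integral {-pi..pi} (\<lambda>\<theta>. A \<theta> powr p0)"
    using Henstock_Kurzweil_Integration.integral_reflect_real[of pi "-pi" "\<lambda>\<theta>. A \<theta> powr p0"] by simp
  also have "Kh * (integral {-pi..pi} (\<lambda>\<theta>. A \<theta> powr p0) + integral {-pi..pi} (\<lambda>\<theta>. A \<theta> powr p0))
      = (if p0 < 1 then 2 else 2 powr p0) * integral {-pi..pi} (\<lambda>\<theta>. A \<theta> powr p0)"
    by (simp add: Kh_def powr_diff)
  finally show ?thesis unfolding A_def .
qed


lemma mean_mono_abstract:
  fixes U Ur Urr Ut Utt :: "real \<Rightarrow> real \<Rightarrow> real"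
  assumes dU: "\<And>r \<theta>. \<bar>r\<bar> < 1 \<Longrightarrow> ((\<lambda>r. U r \<theta>) has_real_derivative Ur r \<theta>) (at r)"
    and dUr: "\<And>r \<theta>. \<bar>r\<bar> < 1 \<Longrightarrow> ((\<lambda>r. Ur r \<theta>) has_real_derivative Urr r \<theta>) (at r)"
    and dUt: "\<And>r \<theta>. \<bar>r\<bar> < 1 \<Longrightarrow> ((\<lambda>\<theta>. Ut r \<theta>) has_real_derivative Utt r \<theta>) (at \<theta>)"
    and per: "\<And>r. \<bar>r\<bar> < 1 \<Longrightarrow> Ut r (-pi) = Ut r pi"
    and cU: "continuous_on ({-1<..<1} \<times> {-pi..pi}) (\<lambda>(r, \<theta>). U r \<theta>)"
    and cUr: "continuous_on ({-1<..<1} \<times> {-pi..pi}) (\<lambda>(r, \<theta>). Ur r \<theta>)"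
    and cUrr: "continuous_on ({-1<..<1} \<times> {-pi..pi}) (\<lambda>(r, \<theta>). Urr r \<theta>)"
    and pos: "\<And>r \<theta>. 0 < r \<Longrightarrow> r < 1 \<Longrightarrow> r * (Ur r \<theta> + r * Urr r \<theta>) + Utt r \<theta> \<ge> 0"
    and rs: "0 \<le> r" "r \<le> s" "s < 1"
  shows "integral {-pi..pi} (U r) \<le> integral {-pi..pi} (U s)"
proof -
  define R where "R = {-1<..<(1::real)}"
  have R: "convex R" "\<And>x. x \<in> R \<longleftrightarrow> \<bar>x\<bar> < 1" by (auto simp: R_def)
  have oR: "open R" by (simp add: R_def)
  have cont1: "continuous_on {-pi..pi} (F x)"
    if "continuous_on (R \<times> {-pi..pi}) (\<lambda>(r, \<theta>). F r \<theta>)" "x \<in> R" for F :: "real \<Rightarrow> real \<Rightarrow> real" and x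
  proof -
    have "continuous_on {-pi..pi} (\<lambda>\<theta>. (\<lambda>(r, \<theta>). F r \<theta>) (x, \<theta>))"
      by (rule continuous_on_compose2[OF that(1)]) (use that(2) in \<open>auto intro!: continuous_intros\<close>)
    then show ?thesis by simp
  qed
  have intU: "U x integrable_on {-pi..pi}" if "x \<in> R" for x
    using cont1[OF cU[folded R_def] that] integrable_continuous_real by blast
  have intUr: "Ur x integrable_on {-pi..pi}" if "x \<in> R" for x
    using cont1[OF cUr[folded R_def] that] integrable_continuous_real by blast
  have intUrr: "Urr x integrable_on {-pi..pi}" if "x \<in> R" for x
    using cont1[OF cUrr[folded R_def] that] integrable_continuous_real by blast
  define m where "m x = integral {-pi..pi} (U x)" for x
  define m1 where "m1 x = integral {-pi..pi} (Ur x)" for x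
  define m2 where "m2 x = integral {-pi..pi} (Urr x)" for x
  have dm: "(m has_real_derivative m1 x) (at x)" if "x \<in> R" for x
  proof -
    have "((\<lambda>x. integral (cbox (-pi) pi) (U x)) has_field_derivative integral (cbox (-pi) pi) (Ur x)) (at x within R)"
    proof (rule leibniz_rule_field_derivative[OF _ _ _ that R(1)])
      show "((\<lambda>x. U x t) has_field_derivative Ur x t) (at x within R)" if "x \<in> R" for x t
        using dU[of x t] that R(2) by (blast intro: has_field_derivative_at_within)
      show "U x integrable_on cbox (- pi) pi" if "x \<in> R" for x using intU[OF that] by simp
      show "continuous_on (R \<times> cbox (- pi) pi) (\<lambda>(x, t). Ur x t)" using cUr by (simp add: R_def)
    qed
    then show ?thesis using at_within_open[OF that oR] unfolding m_def m1_def cbox_interval by simp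
  qed
  have dm1: "(m1 has_real_derivative m2 x) (at x)" if "x \<in> R" for x
  proof -
    have "((\<lambda>x. integral (cbox (-pi) pi) (Ur x)) has_field_derivative integral (cbox (-pi) pi) (Urr x)) (at x within R)"
    proof (rule leibniz_rule_field_derivative[OF _ _ _ that R(1)])
      show "((\<lambda>x. Ur x t) has_field_derivative Urr x t) (at x within R)" if "x \<in> R" for x t
        using dUr[of x t] that R(2) by (blast intro: has_field_derivative_at_within)
      show "Ur x integrable_on cbox (- pi) pi" if "x \<in> R" for x using intUr[OF that] by simp
      show "continuous_on (R \<times> cbox (- pi) pi) (\<lambda>(x, t). Urr x t)" using cUrr by (simp add: R_def)
    qed
    then show ?thesis using at_within_open[OF that oR] unfolding m2_def m1_def cbox_interval by simp
  qed
  define g where "g x = x * m1 x" for x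
  have dg: "(g has_real_derivative (m1 x + x * m2 x)) (at x)" if "x \<in> R" for x
    unfolding g_def using dm1[OF that] by (auto intro!: derivative_eq_intros)
  have g'pos: "m1 x + x * m2 x \<ge> 0" if "0 < x" "x < 1" for x
  proof -
    have xR: "x \<in> R" using that by (simp add: R)
    have ftc: "(Utt x has_integral (Ut x pi - Ut x (-pi))) {-pi..pi}"
      by (rule fundamental_theorem_of_calculus)
         (use dUt[of x] that in \<open>auto simp: has_real_derivative_iff_has_vector_derivative[symmetric]
            intro: has_field_derivative_at_within\<close>)
    then have ftc0: "(Utt x has_integral 0) {-pi..pi}" using per[of x] that by simp
    have "0 = - integral {-pi..pi} (Utt x)" using ftc0 by (simp add: integral_unique)
    also have "\<dots> = integral {-pi..pi} (\<lambda>\<theta>. - Utt x \<theta>)" by (simp add: integral_neg)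
    also have "\<dots> \<le> integral {-pi..pi} (\<lambda>\<theta>. x * (Ur x \<theta> + x * Urr x \<theta>))"
    proof (rule integral_le)
      show "(\<lambda>\<theta>. - Utt x \<theta>) integrable_on {-pi..pi}" using ftc0 by (simp add: integrable_neg has_integral_integrable)
      show "(\<lambda>\<theta>. x * (Ur x \<theta> + x * Urr x \<theta>)) integrable_on {-pi..pi}"
        using integrable_cmul[OF integrable_add[OF intUr[OF xR] integrable_cmul[OF intUrr[OF xR], of x]], of x]
        by simp
      show "\<And>\<theta>. \<theta> \<in> {-pi..pi} \<Longrightarrow> - Utt x \<theta> \<le> x * (Ur x \<theta> + x * Urr x \<theta>)"
        using pos[OF that] by (smt (verit))
    qed
    also have "\<dots> = x * (m1 x + x * m2 x)"
      using intUr[OF xR] intUrr[OF xR] integrable_cmul[OF intUrr[OF xR], of x]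
      by (simp add: m1_def m2_def integral_add)
    finally show ?thesis using that by (simp add: zero_le_mult_iff)
  qed
  have m1pos: "m1 x \<ge> 0" if "0 < x" "x < 1" for x
  proof -
    have "g 0 \<le> g x"
    proof (rule DERIV_nonneg_imp_increasing_open[where f=g and a=0 and b=x])
      show "0 \<le> x" using that by simp
      show "\<exists>y. (g has_real_derivative y) (at y') \<and> 0 \<le> y" if "0 < y'" "y' < x" for y'
      proof -
        have "y' \<in> R" using that \<open>x < 1\<close> by (simp add: R(2))
        moreover have "y' < 1" using that \<open>x < 1\<close> by simp
        ultimately show ?thesis using that(1) by (intro exI[of _ "m1 y' + y' * m2 y'"] conjI dg g'pos)
      qed
      show "continuous_on {0..x} g"
      proof (rule DERIV_continuous_on)
        fix y assume "y \<in> {0..x}"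
        then have "y \<in> R" using that by (simp add: R(2))
        then show "(g has_real_derivative (m1 y + y * m2 y)) (at y within {0..x})"
          by (rule has_field_derivative_at_within[OF dg])
      qed
    qed
    then have "0 \<le> x * m1 x" by (simp add: g_def)
    then show ?thesis using that by (simp add: zero_le_mult_iff)
  qed
  have "m r \<le> m s"
  proof (rule DERIV_nonneg_imp_increasing_open[where f=m and a=r and b=s])
    show "r \<le> s" by fact
    show "\<exists>y. (m has_real_derivative y) (at x) \<and> 0 \<le> y" if "r < x" "x < s" for x
    proof -
      have "x \<in> R" using that rs by (simp add: R(2))
      then show ?thesis using dm[of x] m1pos[of x] that rs by auto
    qed
    show "continuous_on {r..s} m"
    proof (rule DERIV_continuous_on)
      fix y assume "y \<in> {r..s}"
      then have "y \<in> R" using rs by (simp add: R(2))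
      then show "(m has_real_derivative (m1 y)) (at y within {r..s})"
        by (rule has_field_derivative_at_within[OF dm])
    qed
  qed
  then show ?thesis by (simp add: m_def)
qed


definition Mq :: "quat \<Rightarrow> 4 \<Rightarrow> 4 \<Rightarrow> real" where
  "Mq I k j = qmult I (axis j 1) $ k"

lemma qmult_lin: "qmult I x $ k = (\<Sum>j\<in>UNIV. Mq I k j * x $ j)"
proof -
  have "qmult I x = qmult I (\<Sum>j\<in>UNIV. x $ j *\<^sub>R axis j 1)"
    using basis_expansion[of x] by (simp add: scalar_mult_eq_scaleR)
  also have "\<dots> = (\<Sum>j\<in>UNIV. x $ j *\<^sub>R qmult I (axis j 1))"
    using bounded_linear_qmult_right[of I]
    by (simp add: bounded_linear.linear linear_sum linear_scale qmult_scaleR_right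
        real_vector.linear_sum[OF bounded_linear.linear[OF bounded_linear_qmult_right]])
  finally show ?thesis by (simp add: Mq_def mult.commute)
qed

lemma sums_vec_nth: fixes g :: "nat \<Rightarrow> quat" shows "(g sums s) \<Longrightarrow> ((\<lambda>n. g n $ k) sums (s $ k))"
  using bounded_linear.sums[OF bounded_linear_vec_nth[of k], of g s] by simp

locale sreg =
  fixes a :: "nat \<Rightarrow> quat" and f :: "quat \<Rightarrow> quat" and I :: quat
  assumes ha: "\<forall>q\<in>qball. (\<lambda>n. qmult (qpow q n) (a n)) sums f q" and I: "I \<in> qsphere"
begin

definition "b n = qmult I (a n)"
definition "c k n = Complex (a n $ k) (- (b n $ k))"
definition "h k = (\<lambda>z. \<Sum>n. c k n * z^n)"
definition "h1 k = (\<lambda>z. \<Sum>n. diffs (c k) n * z^n)"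
definition "h2 k = (\<lambda>z. \<Sum>n. diffs (diffs (c k)) n * z^n)"
definition "h3 k = (\<lambda>z. \<Sum>n. diffs (diffs (diffs (c k))) n * z^n)"

lemma real_series:
  assumes "0 \<le> \<rho>" "\<rho> < 1"
  shows "summable (\<lambda>n. \<rho>^n *\<^sub>R a n)"
proof -
  have "cmod (complex_of_real \<rho>) < 1" using assms by simp
  from series_slice[OF ha I this] show ?thesis
    by (simp add: of_real_power[symmetric] sums_summable del: of_real_power)
qed

lemma summ_c: assumes z: "cmod z < 1" shows "summable (\<lambda>n. c k n * z^n)"
proof -
  define \<rho> where "\<rho> = (1 + cmod z) / 2"
  have \<rho>: "0 \<le> \<rho>" "\<rho> < 1" "cmod z < \<rho>" using z by (auto simp: \<rho>_def)
  have sa: "summable (\<lambda>n. \<rho>^n *\<^sub>R a n)" by (rule real_series[OF \<rho>(1,2)])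
  have sb: "summable (\<lambda>n. qmult I (\<rho>^n *\<^sub>R a n))"
    by (rule bounded_linear.summable[OF bounded_linear_qmult_right sa])
  have sak: "summable (\<lambda>n. a n $ k * \<rho>^n)"
    using bounded_linear.summable[OF bounded_linear_vec_nth[of k] sa] by (simp add: mult.commute)
  have sbk: "summable (\<lambda>n. b n $ k * \<rho>^n)"
    using bounded_linear.summable[OF bounded_linear_vec_nth[of k] sb]
    by (simp add: mult.commute b_def qmult_scaleR_right)
  have n: "norm (cmod z) < norm \<rho>" using \<rho> by simp
  have A: "summable (\<lambda>n. norm (a n $ k * cmod z ^ n))" by (rule powser_insidea[OF sak n])
  have B: "summable (\<lambda>n. norm (b n $ k * cmod z ^ n))" by (rule powser_insidea[OF sbk n])
  have "summable (\<lambda>n. norm (c k n * z^n))"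
  proof (rule summable_comparison_test[OF _ summable_add[OF A B]])
    show "\<exists>N. \<forall>n\<ge>N. norm (norm (c k n * z ^ n)) \<le> norm (a n $ k * cmod z ^ n) + norm (b n $ k * cmod z ^ n)"
    proof (intro exI allI impI)
      fix n
      have "cmod (c k n) \<le> \<bar>a n $ k\<bar> + \<bar>b n $ k\<bar>" using cmod_le[of "c k n"] by (simp add: c_def)
      then have "cmod (c k n) * cmod z ^ n \<le> (\<bar>a n $ k\<bar> + \<bar>b n $ k\<bar>) * cmod z ^ n"
        by (intro mult_right_mono) auto
      then show "norm (norm (c k n * z ^ n)) \<le> norm (a n $ k * cmod z ^ n) + norm (b n $ k * cmod z ^ n)"
        by (simp add: norm_mult norm_power abs_mult distrib_right)
    qed
  qed
  then show ?thesis by (rule summable_norm_cancel)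
qed

lemma summ_c1: "cmod z < 1 \<Longrightarrow> summable (\<lambda>n. diffs (c k) n * z^n)"
  by (rule termdiff_converges[of z 1]) (auto intro: summ_c)

lemma summ_c2: "cmod z < 1 \<Longrightarrow> summable (\<lambda>n. diffs (diffs (c k)) n * z^n)"
  by (rule termdiff_converges[of z 1]) (auto intro: summ_c1)

lemma summ_c3: "cmod z < 1 \<Longrightarrow> summable (\<lambda>n. diffs (diffs (diffs (c k))) n * z^n)"
  by (rule termdiff_converges[of z 1]) (auto intro: summ_c2)

lemma D0: "cmod z < 1 \<Longrightarrow> (h k has_field_derivative h1 k z) (at z)"
  unfolding h_def h1_def by (rule termdiffs_strong'[of 1]) (auto intro: summ_c)

lemma D1: "cmod z < 1 \<Longrightarrow> (h1 k has_field_derivative h2 k z) (at z)"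
  unfolding h1_def h2_def by (rule termdiffs_strong'[of 1]) (auto intro: summ_c1)

lemma D2: "cmod z < 1 \<Longrightarrow> (h2 k has_field_derivative h3 k z) (at z)"
  unfolding h2_def h3_def by (rule termdiffs_strong'[of 1]) (auto intro: summ_c2)

lemma f_eq: assumes z: "cmod z < 1" shows "f (cq I z) $ k = Re (h k z)"
proof -
  have s1: "(\<lambda>n. (Re (z^n) *\<^sub>R a n + Im (z^n) *\<^sub>R b n) $ k) sums (f (cq I z) $ k)"
    using sums_vec_nth[OF series_slice[OF ha I z]] by (simp add: b_def)
  have s2: "(\<lambda>n. Re (c k n * z^n)) sums Re (h k z)"
    unfolding h_def by (rule sums_Re[OF summable_sums[OF summ_c[OF z]]])
  have "(\<lambda>n. (Re (z^n) *\<^sub>R a n + Im (z^n) *\<^sub>R b n) $ k) = (\<lambda>n. Re (c k n * z^n))"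
    by (simp add: c_def fun_eq_iff mult.commute)
  then show ?thesis using s1 s2 sums_unique2 by metis
qed

end


lemma gen_rel:
  assumes I: "I \<in> qsphere"
    and d: "\<And>k n. d k n = Complex (\<alpha> n $ k) (- (qmult I (\<alpha> n) $ k))"
    and s: "\<And>k. summable (\<lambda>n. d k n * z^n)"
  shows "qmult I (\<chi> j. Re (\<Sum>n. d j n * z^n)) = - (\<chi> j. Im (\<Sum>n. d j n * z^n))"
proof -
  define H where "H j = (\<Sum>n. d j n * z^n)" for j
  have sH: "(\<lambda>n. d j n * z^n) sums H j" for j unfolding H_def by (rule summable_sums[OF s])
  have coef: "(\<Sum>j\<in>UNIV. complex_of_real (Mq I k j) * d j n) = \<i> * d k n" for k n
  proof -
    have re: "(\<Sum>j\<in>UNIV. Mq I k j * \<alpha> n $ j) = qmult I (\<alpha> n) $ k" by (simp add: qmult_lin)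
    have qq: "qmult I (qmult I (\<alpha> n)) = - \<alpha> n" using qsphere_I(3)[OF I]
      by (simp add: qmult_assoc[symmetric] qmult_minus_left)
    have "(\<Sum>j\<in>UNIV. Mq I k j * qmult I (\<alpha> n) $ j) = qmult I (qmult I (\<alpha> n)) $ k"
      by (rule qmult_lin[symmetric])
    also have "\<dots> = - (\<alpha> n $ k)" by (simp only: qq vector_uminus_component)
    finally have im0: "(\<Sum>j\<in>UNIV. Mq I k j * qmult I (\<alpha> n) $ j) = - (\<alpha> n $ k)" .
    have im: "(\<Sum>j\<in>UNIV. - (Mq I k j * qmult I (\<alpha> n) $ j)) = \<alpha> n $ k"
      using im0 sum_negf[of "\<lambda>j. Mq I k j * qmult I (\<alpha> n) $ j" UNIV] by linarith
    show ?thesis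
      by (simp add: complex_eq_iff Re_sum Im_sum d re im)
  qed
  have "(\<lambda>n. \<Sum>j\<in>UNIV. complex_of_real (Mq I k j) * (d j n * z^n)) sums (\<Sum>j\<in>UNIV. complex_of_real (Mq I k j) * H j)" for k
    by (intro sums_sum sums_mult sH)
  moreover have "(\<lambda>n. \<Sum>j\<in>UNIV. complex_of_real (Mq I k j) * (d j n * z^n)) = (\<lambda>n. \<i> * (d k n * z^n))" for k
    using coef by (simp add: sum_distrib_right[symmetric] mult.assoc[symmetric])
  ultimately have "(\<lambda>n. \<i> * (d k n * z^n)) sums (\<Sum>j\<in>UNIV. complex_of_real (Mq I k j) * H j)" for k by simp
  moreover have "(\<lambda>n. \<i> * (d k n * z^n)) sums (\<i> * H k)" for k by (intro sums_mult sH)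
  ultimately have eq: "(\<Sum>j\<in>UNIV. complex_of_real (Mq I k j) * H j) = \<i> * H k" for k
    using sums_unique2 by blast
  show ?thesis
  proof (subst vec_eq_iff, intro allI)
    fix k
    have "qmult I (\<chi> j. Re (H j)) $ k = (\<Sum>j\<in>UNIV. Mq I k j * Re (H j))" by (simp add: qmult_lin)
    also have "\<dots> = Re (\<Sum>j\<in>UNIV. complex_of_real (Mq I k j) * H j)" by (simp add: Re_sum)
    also have "\<dots> = - Im (H k)" by (simp add: eq)
    finally show "qmult I (\<chi> j. Re (\<Sum>n. d j n * z^n)) $ k = (- (\<chi> j. Im (\<Sum>n. d j n * z^n))) $ k"
      by (simp add: H_def)
  qed
qed

lemma zrel:
  assumes I: "I \<in> qsphere" and rel: "qmult I R = - M"
  shows "qmult I (Re w *\<^sub>R R - Im w *\<^sub>R M) = - (Re w *\<^sub>R M + Im w *\<^sub>R R)"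
proof -
  have "qmult I M = R"
  proof -
    have "qmult I M = - qmult I (qmult I R)" using rel by (simp add: qmult_minus_right)
    also have "\<dots> = R" using qsphere_I(3)[OF I] by (simp add: qmult_assoc[symmetric] qmult_minus_left)
    finally show ?thesis .
  qed
  then show ?thesis using rel by (simp add: qmult_diff_right qmult_scaleR_right algebra_simps)
qed

lemma orthI: assumes I: "I \<in> qsphere" shows "inner V (qmult I V) = 0"
  using qsphere_I(1)[OF I] by (simp add: inner_quat qmult_nth algebra_simps)

lemma normI: assumes I: "I \<in> qsphere" shows "norm (qmult I V) = norm V"
  using I by (simp add: norm_qmult qsphere_iff)

lemma bessel:
  assumes I: "I \<in> qsphere"
  shows "(inner P V)^2 + (inner P (qmult I V))^2 \<le> (norm P)^2 * (norm V)^2"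
proof -
  define W where "W = qmult I V"
  define S where "S = (inner P V)^2 + (inner P W)^2"
  have VW: "inner V W = 0" "inner W V = 0" using orthI[OF I] by (simp_all add: W_def inner_commute)
  have WW: "inner W W = (norm V)^2" using normI[OF I] by (simp add: W_def power2_norm_eq_inner[symmetric])
  have VV: "inner V V = (norm V)^2" by (simp add: power2_norm_eq_inner)
  define u where "u = inner P V *\<^sub>R V + inner P W *\<^sub>R W"
  have Pu: "inner P u = S" by (simp add: u_def S_def inner_add_right power2_eq_square)
  have uu: "inner u u = (norm V)^2 * S"
    by (simp add: u_def S_def inner_add_left inner_add_right VW WW VV power2_eq_square algebra_simps)
  have "S^2 \<le> inner P P * ((norm V)^2 * S)"
    using Cauchy_Schwarz_ineq[of P u] by (simp add: Pu uu)
  moreover have "inner P P = norm P * norm P" by (simp add: power2_norm_eq_inner[symmetric] power2_eq_square)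
  ultimately have "S * S \<le> S * ((norm P)^2 * (norm V)^2)"
    by (simp add: power2_eq_square algebra_simps)
  moreover have "S \<ge> 0" by (simp add: S_def)
  ultimately have "S \<le> (norm P)^2 * (norm V)^2"
    by (cases "S = 0") (auto simp: mult_le_cancel_left)
  then show ?thesis by (simp add: S_def W_def)
qed

context sreg begin

lemma rel1: assumes z: "cmod z < 1"
  shows "qmult I (\<chi> j. Re (h1 j z)) = - (\<chi> j. Im (h1 j z))"
  unfolding h1_def
proof (rule gen_rel[OF I, where \<alpha> = "\<lambda>n. of_nat (Suc n) *\<^sub>R a (Suc n)"])
  show "diffs (c k) n = Complex ((of_nat (Suc n) *\<^sub>R a (Suc n)) $ k) (- qmult I (of_nat (Suc n) *\<^sub>R a (Suc n)) $ k)" for k n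
    by (simp add: diffs_def c_def b_def qmult_scaleR_right complex_eq_iff)
  show "summable (\<lambda>n. diffs (c k) n * z ^ n)" for k by (rule summ_c1[OF z])
qed

lemma rel_z: assumes z: "cmod z < 1"
  shows "qmult I (\<chi> j. Re (z * h1 j z)) = - (\<chi> j. Im (z * h1 j z))"
proof -
  have e1: "(\<chi> j. Re (z * h1 j z)) = Re z *\<^sub>R (\<chi> j. Re (h1 j z)) - Im z *\<^sub>R (\<chi> j. Im (h1 j z))"
    by (simp add: vec_eq_iff)
  have e2: "(\<chi> j. Im (z * h1 j z)) = Re z *\<^sub>R (\<chi> j. Im (h1 j z)) + Im z *\<^sub>R (\<chi> j. Re (h1 j z))"
    by (simp add: vec_eq_iff)
  show ?thesis unfolding e1 e2 by (rule zrel[OF I rel1[OF z]])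
qed

end


definition zz :: "real \<Rightarrow> real \<Rightarrow> complex" where "zz r \<theta> = complex_of_real r * cis \<theta>"

lemma norm_zz: "cmod (zz r \<theta>) = \<bar>r\<bar>" by (simp add: zz_def norm_mult)

lemma zz_r: "((\<lambda>r. zz r \<theta>) has_vector_derivative cis \<theta>) (at r)"
  unfolding zz_def using has_vector_derivative_mult_left[OF has_vector_derivative_of_real[OF DERIV_ident], of "cis \<theta>" "at r"]
  by simp

lemma cis_vd: "(cis has_vector_derivative (\<i> * cis \<theta>)) (at \<theta>)"
  using has_derivative_cis[OF has_derivative_ident, of \<theta> UNIV] by (simp add: has_vector_derivative_def)

lemma zz_t: "((\<lambda>\<theta>. zz r \<theta>) has_vector_derivative (\<i> * zz r \<theta>)) (at \<theta>)"
  unfolding zz_def using has_vector_derivative_mult_right[OF cis_vd, of "complex_of_real r"]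
  by (simp add: mult.left_commute)

lemma VD_r:
  assumes DH: "\<And>w. cmod w < 1 \<Longrightarrow> (H has_field_derivative H' w) (at w)" and r: "\<bar>r\<bar> < 1"
  shows "((\<lambda>r. H (zz r \<theta>)) has_vector_derivative (cis \<theta> * H' (zz r \<theta>))) (at r)"
proof -
  have "(H has_field_derivative H' (zz r \<theta>)) (at (zz r \<theta>))" using DH r by (simp add: norm_zz)
  from field_vector_diff_chain_at[OF zz_r this] show ?thesis by (simp add: o_def)
qed

lemma VD_t:
  assumes DH: "\<And>w. cmod w < 1 \<Longrightarrow> (H has_field_derivative H' w) (at w)" and r: "\<bar>r\<bar> < 1"
  shows "((\<lambda>\<theta>. H (zz r \<theta>)) has_vector_derivative (\<i> * zz r \<theta> * H' (zz r \<theta>))) (at \<theta>)"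
proof -
  have "(H has_field_derivative H' (zz r \<theta>)) (at (zz r \<theta>))" using DH r by (simp add: norm_zz)
  from field_vector_diff_chain_at[OF zz_t this] show ?thesis by (simp add: o_def)
qed

lemma cont_comp_zz:
  assumes DH: "\<And>w. cmod w < 1 \<Longrightarrow> (H has_field_derivative H' w) (at w)"
  shows "continuous_on ({-1<..<1} \<times> UNIV) (\<lambda>x. H (zz (fst x) (snd x)))"
proof -
  have cH: "continuous_on (ball 0 1) H"
    by (rule DERIV_continuous_on[where D=H']) (use DH in \<open>auto intro: has_field_derivative_at_within\<close>)
  show ?thesis
    by (rule continuous_on_compose2[OF cH]) (auto simp: zz_def norm_mult intro!: continuous_intros)
qed

context sreg begin

definition "u k r \<theta> = Re (h k (zz r \<theta>))"
definition "ur k r \<theta> = Re (cis \<theta> * h1 k (zz r \<theta>))"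
definition "urr k r \<theta> = Re (cis \<theta> * (cis \<theta> * h2 k (zz r \<theta>)))"
definition "ut k r \<theta> = Re (\<i> * zz r \<theta> * h1 k (zz r \<theta>))"
definition "utt k r \<theta> = Re (- (zz r \<theta> * h1 k (zz r \<theta>)) - (zz r \<theta>)^2 * h2 k (zz r \<theta>))"

lemma Lu_r: "\<bar>r\<bar> < 1 \<Longrightarrow> ((\<lambda>r. u k r \<theta>) has_real_derivative ur k r \<theta>) (at r)"
  unfolding u_def ur_def by (rule has_field_derivative_Re[OF VD_r[OF D0]])

lemma Lur_r: "\<bar>r\<bar> < 1 \<Longrightarrow> ((\<lambda>r. ur k r \<theta>) has_real_derivative urr k r \<theta>) (at r)"
  unfolding ur_def urr_def
  by (rule has_field_derivative_Re[OF has_vector_derivative_mult_right[OF VD_r[OF D1]]])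

lemma Lu_t: "\<bar>r\<bar> < 1 \<Longrightarrow> ((\<lambda>\<theta>. u k r \<theta>) has_real_derivative ut k r \<theta>) (at \<theta>)"
  unfolding u_def ut_def by (rule has_field_derivative_Re[OF VD_t[OF D0]])

lemma Lut_t: assumes r: "\<bar>r\<bar> < 1" shows "((\<lambda>\<theta>. ut k r \<theta>) has_real_derivative utt k r \<theta>) (at \<theta>)"
proof -
  have "((\<lambda>\<theta>. \<i> * (zz r \<theta> * h1 k (zz r \<theta>))) has_vector_derivative
      \<i> * (zz r \<theta> * (\<i> * zz r \<theta> * h2 k (zz r \<theta>)) + \<i> * zz r \<theta> * h1 k (zz r \<theta>))) (at \<theta>)"
    by (intro has_vector_derivative_mult_right has_vector_derivative_mult zz_t VD_t[OF D1 r])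
  moreover have "\<i> * (zz r \<theta> * (\<i> * zz r \<theta> * h2 k (zz r \<theta>)) + \<i> * zz r \<theta> * h1 k (zz r \<theta>))
      = - (zz r \<theta> * h1 k (zz r \<theta>)) - (zz r \<theta>)^2 * h2 k (zz r \<theta>)"
    by (simp add: algebra_simps power2_eq_square)
  ultimately have vd: "((\<lambda>\<theta>. \<i> * zz r \<theta> * h1 k (zz r \<theta>)) has_vector_derivative
      (- (zz r \<theta> * h1 k (zz r \<theta>)) - (zz r \<theta>)^2 * h2 k (zz r \<theta>))) (at \<theta>)"
    by (simp only: mult.assoc)
  from has_field_derivative_Re[OF vd] show ?thesis unfolding ut_def utt_def .
qed

lemma harm: "r * ur k r \<theta> + r^2 * urr k r \<theta> + utt k r \<theta> = 0"
proof -
  have "r * ur k r \<theta> = Re (zz r \<theta> * h1 k (zz r \<theta>))"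
    by (simp add: ur_def zz_def mult.assoc)
  moreover have "r^2 * urr k r \<theta> = Re ((zz r \<theta>)^2 * h2 k (zz r \<theta>))"
    by (simp add: urr_def zz_def power2_eq_square algebra_simps)
  ultimately show ?thesis by (simp add: utt_def)
qed

end


context sreg begin

definition "tq r \<theta> = (\<Sum>k\<in>UNIV. (u k r \<theta>)^2)"
definition "tq_r r \<theta> = (\<Sum>k\<in>UNIV. 2 * u k r \<theta> * ur k r \<theta>)"
definition "tq_rr r \<theta> = (\<Sum>k\<in>UNIV. 2 * ((ur k r \<theta>)^2 + u k r \<theta> * urr k r \<theta>))"
definition "tq_t r \<theta> = (\<Sum>k\<in>UNIV. 2 * u k r \<theta> * ut k r \<theta>)"
definition "tq_tt r \<theta> = (\<Sum>k\<in>UNIV. 2 * ((ut k r \<theta>)^2 + u k r \<theta> * utt k r \<theta>))"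

lemma tq_nonneg: "tq r \<theta> \<ge> 0" by (simp add: tq_def sum_nonneg)

lemma Ltq_r: assumes r: "\<bar>r\<bar> < 1" shows "((\<lambda>r. tq r \<theta>) has_real_derivative tq_r r \<theta>) (at r)"
  unfolding tq_def tq_r_def
proof (rule DERIV_sum)
  fix k :: 4
  show "((\<lambda>r. (u k r \<theta>)^2) has_real_derivative 2 * u k r \<theta> * ur k r \<theta>) (at r)"
    using Lu_r[OF r, of k \<theta>] by (auto intro!: derivative_eq_intros)
qed

lemma Ltqr_r: assumes r: "\<bar>r\<bar> < 1" shows "((\<lambda>r. tq_r r \<theta>) has_real_derivative tq_rr r \<theta>) (at r)"
  unfolding tq_rr_def tq_r_def
proof (rule DERIV_sum)
  fix k :: 4
  show "((\<lambda>r. 2 * u k r \<theta> * ur k r \<theta>) has_real_derivative 2 * ((ur k r \<theta>)^2 + u k r \<theta> * urr k r \<theta>)) (at r)"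
    using Lu_r[OF r, of k \<theta>] Lur_r[OF r, of k \<theta>]
    by (auto intro!: derivative_eq_intros simp: power2_eq_square algebra_simps)
qed

lemma Ltq_t: assumes r: "\<bar>r\<bar> < 1" shows "((\<lambda>\<theta>. tq r \<theta>) has_real_derivative tq_t r \<theta>) (at \<theta>)"
  unfolding tq_def tq_t_def
proof (rule DERIV_sum)
  fix k :: 4
  show "((\<lambda>\<theta>. (u k r \<theta>)^2) has_real_derivative 2 * u k r \<theta> * ut k r \<theta>) (at \<theta>)"
    using Lu_t[OF r, of k \<theta>] by (auto intro!: derivative_eq_intros)
qed

lemma Ltqt_t: assumes r: "\<bar>r\<bar> < 1" shows "((\<lambda>\<theta>. tq_t r \<theta>) has_real_derivative tq_tt r \<theta>) (at \<theta>)"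
  unfolding tq_tt_def tq_t_def
proof (rule DERIV_sum)
  fix k :: 4
  show "((\<lambda>\<theta>. 2 * u k r \<theta> * ut k r \<theta>) has_real_derivative 2 * ((ut k r \<theta>)^2 + u k r \<theta> * utt k r \<theta>)) (at \<theta>)"
    using Lu_t[OF r, of k \<theta>] Lut_t[OF r, of k \<theta>]
    by (auto intro!: derivative_eq_intros simp: power2_eq_square algebra_simps)
qed

end


lemma key_ineq:
  fixes q T X Y :: real
  assumes q: "q > 0" and T: "T > 0" and X: "X \<ge> 0" and Y: "Y \<ge> 0" "Y \<le> 4 * T * X"
  shows "q * T powr (q - 1) * (4 * X) + q * (q - 1) * T powr (q - 2) * Y \<ge> 0"
proof (cases "q \<ge> 1")
  case True then show ?thesis using q X Y by (intro add_nonneg_nonneg mult_nonneg_nonneg) auto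
next
  case False
  have T1: "T powr 1 = T" using T by simp
  have "T powr (q - 2) * T powr 1 = T powr (q - 1)" by (subst powr_add[symmetric]) simp
  then have TT: "T powr (q - 2) * T = T powr (q - 1)" by (simp only: T1)
  have "q * (q - 1) < 0" using False q by (intro mult_pos_neg) auto
  then have c: "q * (q - 1) * T powr (q - 2) \<le> 0" by (rule mult_nonpos_nonneg[OF less_imp_le]) simp
  have "q * (q - 1) * T powr (q - 2) * (4 * T * X) \<le> q * (q - 1) * T powr (q - 2) * Y"
    using Y(2) c by (rule mult_left_mono_neg)
  moreover have "q * (q - 1) * T powr (q - 2) * (4 * T * X) = 4 * q * (q - 1) * X * T powr (q - 1)"
  proof -
    have "q * (q - 1) * T powr (q - 2) * (4 * T * X) = 4 * q * (q - 1) * X * (T powr (q - 2) * T)"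
      by (simp only: mult_ac)
    then show ?thesis by (simp only: TT)
  qed
  moreover have "q * T powr (q - 1) * (4 * X) + 4 * q * (q - 1) * X * T powr (q - 1) = 4 * q^2 * X * T powr (q - 1)"
    by (simp add: algebra_simps power2_eq_square)
  moreover have "4 * q^2 * X * T powr (q - 1) \<ge> 0" using X by simp
  ultimately show ?thesis by linarith
qed

context sreg begin

definition "UU \<epsilon> q r \<theta> = (tq r \<theta> + \<epsilon>) powr q"
definition "UUr \<epsilon> q r \<theta> = q * (tq r \<theta> + \<epsilon>) powr (q - 1) * tq_r r \<theta>"
definition "UUrr \<epsilon> q r \<theta> = q * ((q - 1) * (tq r \<theta> + \<epsilon>) powr (q - 2) * tq_r r \<theta> * tq_r r \<theta> + (tq r \<theta> + \<epsilon>) powr (q - 1) * tq_rr r \<theta>)"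
definition "UUt \<epsilon> q r \<theta> = q * (tq r \<theta> + \<epsilon>) powr (q - 1) * tq_t r \<theta>"
definition "UUtt \<epsilon> q r \<theta> = q * ((q - 1) * (tq r \<theta> + \<epsilon>) powr (q - 2) * tq_t r \<theta> * tq_t r \<theta> + (tq r \<theta> + \<epsilon>) powr (q - 1) * tq_tt r \<theta>)"

lemma LU_r: assumes r: "\<bar>r\<bar> < 1" and e: "\<epsilon> > 0"
  shows "((\<lambda>r. UU \<epsilon> q r \<theta>) has_real_derivative UUr \<epsilon> q r \<theta>) (at r)"
proof -
  have pos: "tq r \<theta> + \<epsilon> > 0" using tq_nonneg[of r \<theta>] e by linarith
  have "((\<lambda>r. tq r \<theta> + \<epsilon>) has_real_derivative tq_r r \<theta>) (at r)"
    using Ltq_r[OF r] by (auto intro!: derivative_eq_intros)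
  from DERIV_fun_powr[OF this pos, of q] show ?thesis by (simp add: UU_def UUr_def)
qed

lemma LUr_r: assumes r: "\<bar>r\<bar> < 1" and e: "\<epsilon> > 0"
  shows "((\<lambda>r. UUr \<epsilon> q r \<theta>) has_real_derivative UUrr \<epsilon> q r \<theta>) (at r)"
proof -
  have pos: "tq r \<theta> + \<epsilon> > 0" using tq_nonneg[of r \<theta>] e by linarith
  have "((\<lambda>r. tq r \<theta> + \<epsilon>) has_real_derivative tq_r r \<theta>) (at r)"
    using Ltq_r[OF r] by (auto intro!: derivative_eq_intros)
  from DERIV_fun_powr[OF this pos, of "q - 1"]
  have d1: "((\<lambda>r. (tq r \<theta> + \<epsilon>) powr (q - 1)) has_real_derivative (q - 1) * (tq r \<theta> + \<epsilon>) powr (q - 2) * tq_r r \<theta>) (at r)"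
    by (simp add: algebra_simps)
  note DERIV_mult[OF DERIV_cmult[OF d1, of q] Ltqr_r[OF r]]
  then show ?thesis by (simp add: UUr_def UUrr_def algebra_simps)
qed

lemma LU_t: assumes r: "\<bar>r\<bar> < 1" and e: "\<epsilon> > 0"
  shows "((\<lambda>\<theta>. UUt \<epsilon> q r \<theta>) has_real_derivative UUtt \<epsilon> q r \<theta>) (at \<theta>)"
proof -
  have pos: "tq r \<theta> + \<epsilon> > 0" using tq_nonneg[of r \<theta>] e by linarith
  have "((\<lambda>\<theta>. tq r \<theta> + \<epsilon>) has_real_derivative tq_t r \<theta>) (at \<theta>)"
    using Ltq_t[OF r] by (auto intro!: derivative_eq_intros)
  from DERIV_fun_powr[OF this pos, of "q - 1"]
  have d1: "((\<lambda>\<theta>. (tq r \<theta> + \<epsilon>) powr (q - 1)) has_real_derivative (q - 1) * (tq r \<theta> + \<epsilon>) powr (q - 2) * tq_t r \<theta>) (at \<theta>)"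
    by (simp add: algebra_simps)
  note DERIV_mult[OF DERIV_cmult[OF d1, of q] Ltqt_t[OF r]]
  then show ?thesis by (simp add: UUt_def UUtt_def algebra_simps)
qed

end


lemma inner_sum_quat: "inner (x::quat) y = (\<Sum>k\<in>UNIV. x$k * y$k)"
  by (simp add: inner_vec_def)

lemma norm2_sum_quat: "(norm (x::quat))^2 = (\<Sum>k\<in>UNIV. (x$k)^2)"
proof -
  have "(norm x)^2 = inner x x" by (rule power2_norm_eq_inner)
  also have "\<dots> = (\<Sum>k\<in>UNIV. (x$k)^2)" by (simp add: inner_sum_quat power2_eq_square)
  finally show ?thesis .
qed

context sreg begin

lemma W_eq: assumes r: "\<bar>r\<bar> < 1"
  shows "(\<chi> k. ut k r \<theta>) = qmult I (\<chi> k. r * ur k r \<theta>)"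
proof -
  have z: "cmod (zz r \<theta>) < 1" using r by (simp add: norm_zz)
  have V: "(\<chi> k. r * ur k r \<theta>) = (\<chi> k. Re (zz r \<theta> * h1 k (zz r \<theta>)))"
    by (simp add: ur_def zz_def mult.assoc vec_eq_iff)
  have W: "(\<chi> k. ut k r \<theta>) = - (\<chi> k. Im (zz r \<theta> * h1 k (zz r \<theta>)))"
    by (simp add: ut_def vec_eq_iff mult.assoc)
  show ?thesis unfolding V W by (rule rel_z[OF z, symmetric])
qed

lemma pos_UU:
  assumes r: "\<bar>r\<bar> < 1" and e: "\<epsilon> > 0" and q: "q > 0"
  shows "r * (UUr \<epsilon> q r \<theta> + r * UUrr \<epsilon> q r \<theta>) + UUtt \<epsilon> q r \<theta> \<ge> 0"
proof -
  define P where "P = (\<chi> k. u k r \<theta>)"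
  define V where "V = (\<chi> k. r * ur k r \<theta>)"
  define W where "W = (\<chi> k. ut k r \<theta>)"
  define T where "T = tq r \<theta> + \<epsilon>"
  have T: "T > 0" using tq_nonneg[of r \<theta>] e by (simp add: T_def)
  have WV: "W = qmult I V" unfolding W_def V_def by (rule W_eq[OF r])
  have nW: "norm W = norm V" using normI[OF I] by (simp add: WV)
  have tqP: "tq r \<theta> = (norm P)^2" by (simp add: tq_def norm2_sum_quat P_def)
  have A: "r * tq_r r \<theta> = 2 * inner P V"
    by (simp add: tq_r_def inner_sum_quat P_def V_def sum_distrib_left algebra_simps)
  have B: "tq_t r \<theta> = 2 * inner P W"
    by (simp add: tq_t_def inner_sum_quat P_def W_def sum_distrib_left algebra_simps)
  have S: "r * tq_r r \<theta> + r^2 * tq_rr r \<theta> + tq_tt r \<theta> = 4 * (norm V)^2"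
  proof -
    have "r * tq_r r \<theta> + r^2 * tq_rr r \<theta> + tq_tt r \<theta> =
      (\<Sum>k\<in>UNIV. r * (2 * u k r \<theta> * ur k r \<theta>) + r^2 * (2 * ((ur k r \<theta>)^2 + u k r \<theta> * urr k r \<theta>))
          + 2 * ((ut k r \<theta>)^2 + u k r \<theta> * utt k r \<theta>))"
      by (simp add: tq_r_def tq_rr_def tq_tt_def sum_distrib_left sum.distrib distrib_left)
    also have "\<dots> = (\<Sum>k\<in>UNIV. 2 * (r * ur k r \<theta>)^2 + 2 * (ut k r \<theta>)^2)"
    proof (rule sum.cong[OF refl])
      fix k
      have e: "utt k r \<theta> = - (r * ur k r \<theta> + r^2 * urr k r \<theta>)" using harm[of r k \<theta>] by linarith
      show "r * (2 * u k r \<theta> * ur k r \<theta>) + r^2 * (2 * ((ur k r \<theta>)^2 + u k r \<theta> * urr k r \<theta>))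
          + 2 * ((ut k r \<theta>)^2 + u k r \<theta> * utt k r \<theta>) = 2 * (r * ur k r \<theta>)^2 + 2 * (ut k r \<theta>)^2"
        unfolding e by (simp add: algebra_simps power2_eq_square)
    qed
    also have "\<dots> = 2 * (norm V)^2 + 2 * (norm W)^2"
      by (simp add: norm2_sum_quat V_def W_def sum.distrib sum_distrib_left)
    finally show ?thesis using nW by simp
  qed
  have Y: "(r * tq_r r \<theta>)^2 + (tq_t r \<theta>)^2 \<le> 4 * T * (norm V)^2"
  proof -
    have "(r * tq_r r \<theta>)^2 + (tq_t r \<theta>)^2 = 4 * ((inner P V)^2 + (inner P (qmult I V))^2)"
      by (simp add: A B WV power2_eq_square algebra_simps)
    also have "\<dots> \<le> 4 * ((norm P)^2 * (norm V)^2)" using bessel[OF I, of P V] by simp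
    also have "\<dots> \<le> 4 * (T * (norm V)^2)"
      using tqP e by (intro mult_left_mono mult_right_mono) (auto simp: T_def)
    finally show ?thesis by simp
  qed
  have eq: "r * (UUr \<epsilon> q r \<theta> + r * UUrr \<epsilon> q r \<theta>) + UUtt \<epsilon> q r \<theta> =
     q * T powr (q - 1) * (r * tq_r r \<theta> + r^2 * tq_rr r \<theta> + tq_tt r \<theta>) +
     q * (q - 1) * T powr (q - 2) * ((r * tq_r r \<theta>)^2 + (tq_t r \<theta>)^2)"
    by (simp add: UUr_def UUrr_def UUtt_def T_def algebra_simps power2_eq_square)
  show ?thesis unfolding eq S
    by (rule key_ineq[OF q T _ _ Y]) auto
qed

end


lemma cis_minus_pi: "cis (-pi) = cis pi" by (simp add: complex_eq_iff)

context sreg begin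

abbreviation "SS \<equiv> {-1<..<(1::real)} \<times> (UNIV :: real set)"

lemma cH0: "continuous_on SS (\<lambda>x. h k (zz (fst x) (snd x)))" by (rule cont_comp_zz[OF D0])
lemma cH1: "continuous_on SS (\<lambda>x. h1 k (zz (fst x) (snd x)))" by (rule cont_comp_zz[OF D1])
lemma cH2: "continuous_on SS (\<lambda>x. h2 k (zz (fst x) (snd x)))" by (rule cont_comp_zz[OF D2])

lemma c_u: "continuous_on SS (\<lambda>x. u k (fst x) (snd x))"
  unfolding u_def by (intro continuous_intros cH0)
lemma c_ur: "continuous_on SS (\<lambda>x. ur k (fst x) (snd x))"
  unfolding ur_def by (intro continuous_intros cH1)
lemma c_urr: "continuous_on SS (\<lambda>x. urr k (fst x) (snd x))"
  unfolding urr_def by (intro continuous_intros cH2)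

lemma c_tq: "continuous_on SS (\<lambda>x. tq (fst x) (snd x))"
  unfolding tq_def by (intro continuous_intros c_u)
lemma c_tqr: "continuous_on SS (\<lambda>x. tq_r (fst x) (snd x))"
  unfolding tq_r_def by (intro continuous_intros c_u c_ur)
lemma c_tqrr: "continuous_on SS (\<lambda>x. tq_rr (fst x) (snd x))"
  unfolding tq_rr_def by (intro continuous_intros c_u c_ur c_urr)

lemma tq_eps_pos: "\<epsilon> > 0 \<Longrightarrow> tq r \<theta> + \<epsilon> \<noteq> 0"
  using tq_nonneg[of r \<theta>] by linarith

lemma c_UU: "\<epsilon> > 0 \<Longrightarrow> continuous_on SS (\<lambda>x. UU \<epsilon> q (fst x) (snd x))"
  unfolding UU_def by (intro continuous_intros c_tq) (auto simp: tq_eps_pos)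
lemma c_UUr: "\<epsilon> > 0 \<Longrightarrow> continuous_on SS (\<lambda>x. UUr \<epsilon> q (fst x) (snd x))"
  unfolding UUr_def by (intro continuous_intros c_tq c_tqr) (auto simp: tq_eps_pos)
lemma c_UUrr: "\<epsilon> > 0 \<Longrightarrow> continuous_on SS (\<lambda>x. UUrr \<epsilon> q (fst x) (snd x))"
  unfolding UUrr_def by (intro continuous_intros c_tq c_tqr c_tqrr) (auto simp: tq_eps_pos)

lemma restrict_cont:
  assumes "continuous_on SS (\<lambda>x. F (fst x) (snd x))"
  shows "continuous_on ({-1<..<1} \<times> {-pi..pi}) (\<lambda>(r, \<theta>). F r \<theta>)"
  unfolding case_prod_beta' by (rule continuous_on_subset[OF assms]) auto

lemma per_UUt: "UUt \<epsilon> q r (-pi) = UUt \<epsilon> q r pi"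
proof -
  have z: "zz r (-pi) = zz r pi" by (simp add: zz_def cis_minus_pi)
  have "u k r (-pi) = u k r pi" "ut k r (-pi) = ut k r pi" for k
    by (simp_all add: u_def ut_def z)
  then show ?thesis by (simp add: UUt_def tq_def tq_t_def)
qed

lemma UU_mono:
  assumes e: "\<epsilon> > 0" and q: "q > 0" and rs: "0 \<le> r" "r \<le> s" "s < 1"
  shows "integral {-pi..pi} (UU \<epsilon> q r) \<le> integral {-pi..pi} (UU \<epsilon> q s)"
proof (rule mean_mono_abstract[where Ur = "UUr \<epsilon> q" and Urr = "UUrr \<epsilon> q" and Ut = "UUt \<epsilon> q" and Utt = "UUtt \<epsilon> q"])
  show "((\<lambda>r. UU \<epsilon> q r \<theta>) has_real_derivative UUr \<epsilon> q r \<theta>) (at r)" if "\<bar>r\<bar> < 1" for r \<theta>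
    by (rule LU_r[OF that e])
  show "((\<lambda>r. UUr \<epsilon> q r \<theta>) has_real_derivative UUrr \<epsilon> q r \<theta>) (at r)" if "\<bar>r\<bar> < 1" for r \<theta>
    by (rule LUr_r[OF that e])
  show "((\<lambda>\<theta>. UUt \<epsilon> q r \<theta>) has_real_derivative UUtt \<epsilon> q r \<theta>) (at \<theta>)" if "\<bar>r\<bar> < 1" for r \<theta>
    by (rule LU_t[OF that e])
  show "UUt \<epsilon> q r (- pi) = UUt \<epsilon> q r pi" for r by (rule per_UUt)
  show "continuous_on ({-1<..<1} \<times> {-pi..pi}) (\<lambda>(r, \<theta>). UU \<epsilon> q r \<theta>)"
    by (rule restrict_cont[OF c_UU[OF e]])
  show "continuous_on ({-1<..<1} \<times> {-pi..pi}) (\<lambda>(r, \<theta>). UUr \<epsilon> q r \<theta>)"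
    by (rule restrict_cont[OF c_UUr[OF e]])
  show "continuous_on ({-1<..<1} \<times> {-pi..pi}) (\<lambda>(r, \<theta>). UUrr \<epsilon> q r \<theta>)"
    by (rule restrict_cont[OF c_UUrr[OF e]])
  show "r * (UUr \<epsilon> q r \<theta> + r * UUrr \<epsilon> q r \<theta>) + UUtt \<epsilon> q r \<theta> \<ge> 0" if "0 < r" "r < 1" for r \<theta>
    using that by (intro pos_UU e q) auto
qed (use rs in auto)

end


context sreg begin

lemma norm_f_tq: assumes r: "\<bar>r\<bar> < 1"
  shows "norm (f (cq I (complex_of_real r * cis \<theta>))) powr p0 = (tq r \<theta>) powr (p0/2)"
proof -
  have z: "cmod (zz r \<theta>) < 1" using r by (simp add: norm_zz)
  have fv: "f (cq I (zz r \<theta>)) = (\<chi> k. u k r \<theta>)"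
    by (simp add: vec_eq_iff f_eq[OF z] u_def)
  have "(norm (f (cq I (zz r \<theta>))))^2 = tq r \<theta>"
    by (simp add: fv norm2_sum_quat tq_def)
  then have "norm (f (cq I (zz r \<theta>))) = sqrt (tq r \<theta>)"
    by (metis norm_ge_zero real_sqrt_unique)
  then have "norm (f (cq I (zz r \<theta>))) = tq r \<theta> powr (1/2)"
    using tq_nonneg by (simp add: powr_half_sqrt)
  then have "norm (f (cq I (zz r \<theta>))) powr p0 = tq r \<theta> powr (1/2 * p0)"
    by (simp add: powr_powr)
  then show ?thesis by (simp add: zz_def)
qed

lemma c_tq_slice: "\<bar>\<rho>\<bar> < 1 \<Longrightarrow> continuous_on A (tq \<rho>)"
proof -
  assume r: "\<bar>\<rho>\<bar> < 1"
  have "continuous_on A (\<lambda>\<theta>. (\<lambda>x. tq (fst x) (snd x)) (\<rho>, \<theta>))"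
    by (rule continuous_on_compose2[OF c_tq]) (use r in \<open>auto intro!: continuous_intros\<close>)
  then show ?thesis by simp
qed

lemma F_mono_loc:
  assumes p: "0 < p0" and rs: "0 \<le> r" "r \<le> s" "s < 1"
  shows "integral {-pi..pi} (\<lambda>\<theta>. norm (f (cq I (complex_of_real r * cis \<theta>))) powr p0)
       \<le> integral {-pi..pi} (\<lambda>\<theta>. norm (f (cq I (complex_of_real s * cis \<theta>))) powr p0)"
proof -
  define q where "q = p0 / 2"
  have q: "q > 0" using p by (simp add: q_def)
  have r1: "\<bar>r\<bar> < 1" and s1: "\<bar>s\<bar> < 1" using rs by auto
  have eqr: "integral {-pi..pi} (\<lambda>\<theta>. norm (f (cq I (complex_of_real r * cis \<theta>))) powr p0) =
      integral {-pi..pi} (\<lambda>\<theta>. tq r \<theta> powr q)"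
    using norm_f_tq[OF r1] by (simp add: q_def)
  have eqs: "integral {-pi..pi} (\<lambda>\<theta>. norm (f (cq I (complex_of_real s * cis \<theta>))) powr p0) =
      integral {-pi..pi} (\<lambda>\<theta>. tq s \<theta> powr q)"
    using norm_f_tq[OF s1] by (simp add: q_def)
  have ctq: "continuous_on A (\<lambda>\<theta>. tq \<rho> \<theta> powr q)" if "\<bar>\<rho>\<bar> < 1" for \<rho> A
    using c_tq_slice[OF that, of A] q tq_nonneg by (intro continuous_on_powr' continuous_intros) auto
  have cUU: "continuous_on A (UU \<epsilon> q \<rho>)" if "\<bar>\<rho>\<bar> < 1" "\<epsilon> > 0" for \<rho> A \<epsilon>
    unfolding UU_def using c_tq_slice[OF that(1), of A] that(2)
    by (intro continuous_intros) (auto simp: tq_eps_pos)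
  show ?thesis unfolding eqr eqs
  proof (rule field_le_epsilon)
    fix e :: real assume e: "e > 0"
    have "compact ((tq s) ` {-pi..pi})"
      by (rule compact_continuous_image[OF c_tq_slice[OF s1] compact_Icc])
    then obtain B where B: "\<forall>x\<in>(tq s) ` {-pi..pi}. \<bar>x\<bar> \<le> B"
      using compact_imp_bounded bounded_real by blast
    define T where "T = max B 0"
    have T: "\<And>\<theta>. \<theta> \<in> {-pi..pi} \<Longrightarrow> tq s \<theta> \<le> T" using B by (force simp: T_def)
    have "continuous_on {0..T+1} (\<lambda>x::real. x powr q)"
      using q by (intro continuous_on_powr' continuous_intros) auto
    then have uc: "uniformly_continuous_on {0..T+1} (\<lambda>x::real. x powr q)"
      by (rule compact_uniformly_continuous) simp
    have e2: "e / (2*pi) > 0" using e by simp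
    obtain d where d: "d > 0" and hd: "\<And>x x'. x \<in> {0..T+1} \<Longrightarrow> x' \<in> {0..T+1} \<Longrightarrow> dist x' x < d \<Longrightarrow>
        dist (x' powr q) (x powr q) < e / (2*pi)"
      using uc[unfolded uniformly_continuous_on_def, rule_format, OF e2] by metis
    define \<epsilon> where "\<epsilon> = min 1 (d/2)"
    have ep: "\<epsilon> > 0" "\<epsilon> \<le> 1" "\<epsilon> < d" using d by (auto simp: \<epsilon>_def)
    have pt: "UU \<epsilon> q s \<theta> \<le> tq s \<theta> powr q + e / (2*pi)" if "\<theta> \<in> {-pi..pi}" for \<theta>
    proof -
      have "dist ((tq s \<theta> + \<epsilon>) powr q) (tq s \<theta> powr q) < e / (2*pi)"
        using hd[of "tq s \<theta>" "tq s \<theta> + \<epsilon>"] T[OF that] tq_nonneg[of s \<theta>] ep by (auto simp: dist_real_def)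
      then show ?thesis by (simp add: UU_def dist_real_def)
    qed
    have "integral {-pi..pi} (\<lambda>\<theta>. tq r \<theta> powr q) \<le> integral {-pi..pi} (UU \<epsilon> q r)"
    proof (rule integral_le)
      show "(\<lambda>\<theta>. tq r \<theta> powr q) integrable_on {-pi..pi}" by (rule integrable_continuous_real, rule ctq[OF r1])
      show "UU \<epsilon> q r integrable_on {-pi..pi}" by (rule integrable_continuous_real, rule cUU[OF r1 ep(1)])
      show "tq r \<theta> powr q \<le> UU \<epsilon> q r \<theta>" for \<theta>
        unfolding UU_def using q ep tq_nonneg[of r \<theta>] by (intro powr_mono2) auto
    qed
    also have "\<dots> \<le> integral {-pi..pi} (UU \<epsilon> q s)" by (rule UU_mono[OF ep(1) q rs])
    also have "\<dots> \<le> integral {-pi..pi} (\<lambda>\<theta>. tq s \<theta> powr q + e / (2*pi))"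
    proof (rule integral_le)
      show "UU \<epsilon> q s integrable_on {-pi..pi}" by (rule integrable_continuous_real, rule cUU[OF s1 ep(1)])
      show "(\<lambda>\<theta>. tq s \<theta> powr q + e / (2*pi)) integrable_on {-pi..pi}"
        by (rule integrable_continuous_real) (intro continuous_intros ctq[OF s1])
    qed (rule pt)
    also have "\<dots> = integral {-pi..pi} (\<lambda>\<theta>. tq s \<theta> powr q) + integral {-pi..pi} (\<lambda>\<theta>. e / (2*pi))"
      by (rule integral_add[OF integrable_continuous_real[OF ctq[OF s1]] integrable_const_ivl])
    also have "integral {-pi..pi} (\<lambda>\<theta>. e / (2*pi)) = e"
      by simp
    finally show "integral {-pi..pi} (\<lambda>\<theta>. tq r \<theta> powr q) \<le> integral {-pi..pi} (\<lambda>\<theta>. tq s \<theta> powr q) + e" .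
  qed
qed

lemma F_cont_loc: "continuous_on (ball 0 1) (\<lambda>z. f (cq I z))"
proof -
  have ch: "continuous_on (ball 0 1) (h k)" for k
    by (rule DERIV_continuous_on[where D="h1 k"]) (auto intro: has_field_derivative_at_within D0)
  have "continuous_on (ball 0 1) (\<lambda>z. \<chi> k. Re (h k z))"
    by (intro continuous_on_vec_lambda continuous_intros ch)
  moreover have "\<And>z. z \<in> ball 0 1 \<Longrightarrow> f (cq I z) = (\<chi> k. Re (h k z))"
    by (simp add: vec_eq_iff f_eq)
  ultimately show ?thesis by (metis (no_types, lifting) continuous_on_cong)
qed

end

lemma F_cont:
  assumes ha: "\<forall>q\<in>qball. (\<lambda>n. qmult (qpow q n) (a n)) sums f q" and I: "I \<in> qsphere"
  shows "continuous_on (ball 0 1) (\<lambda>z. f (cq I z))"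
proof -
  interpret sreg a f I using ha I by unfold_locales
  show ?thesis by (rule F_cont_loc)
qed

lemma F_mono:
  assumes ha: "\<forall>q\<in>qball. (\<lambda>n. qmult (qpow q n) (a n)) sums f q" and I: "I \<in> qsphere"
    and p: "0 < p0" and rs: "0 \<le> r" "r \<le> s" "s < 1"
  shows "integral {-pi..pi} (\<lambda>\<theta>. norm (f (cq I (of_real r * cis \<theta>))) powr p0)
       \<le> integral {-pi..pi} (\<lambda>\<theta>. norm (f (cq I (of_real s * cis \<theta>))) powr p0)"
proof -
  interpret sreg a f I using ha I by unfold_locales
  show ?thesis by (rule F_mono_loc[OF p rs])
qed


lemma Mp_eq: "Mp p0 f I r = ((1/(2*pi)) * integral {-pi..pi} (\<lambda>\<theta>. norm (f (cq I (of_real r * cis \<theta>))) powr p0)) powr (1/p0)"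
  by (simp add: Mp_def qexp_cq)

lemma int_nonneg: "0 \<le> integral {-pi..pi} (\<lambda>\<theta>. norm (f (cq I (of_real r * cis \<theta>))) powr p0)"
proof (cases "(\<lambda>\<theta>. norm (f (cq I (of_real r * cis \<theta>))) powr p0) integrable_on {-pi..pi}")
  case True then show ?thesis by (rule integral_nonneg) auto
qed (simp add: not_integrable_integral)

lemma Mp_bound:
  assumes ha: "\<forall>q\<in>qball. (\<lambda>n. qmult (qpow q n) (a n)) sums f q"
    and I: "I \<in> qsphere" and J: "J \<in> qsphere" and r: "\<bar>r\<bar> < 1" and p: "0 < p0"
  shows "Mp p0 f I r \<le> (if p0 < 1 then 2 powr (1/p0) else 2) * Mp p0 f J r"
proof -
  define X where "X = integral {-pi..pi} (\<lambda>\<theta>. norm (f (cq I (of_real r * cis \<theta>))) powr p0)"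
  define Y where "Y = integral {-pi..pi} (\<lambda>\<theta>. norm (f (cq J (of_real r * cis \<theta>))) powr p0)"
  define K where "K = (if p0 < 1 then 2 else 2 powr p0)"
  have X0: "X \<ge> 0" and Y0: "Y \<ge> 0" unfolding X_def Y_def by (rule int_nonneg)+
  have K0: "K \<ge> 0" by (simp add: K_def)
  have XY: "X \<le> K * Y" unfolding X_def Y_def K_def
    by (rule int_bound[OF ha I J r p F_cont[OF ha J] F_cont[OF ha I]])
  have "Mp p0 f I r = ((1/(2*pi)) * X) powr (1/p0)" by (simp add: Mp_eq X_def)
  also have "\<dots> \<le> ((1/(2*pi)) * (K * Y)) powr (1/p0)"
    using X0 XY p by (intro powr_mono2 mult_left_mono) auto
  also have "\<dots> = K powr (1/p0) * ((1/(2*pi)) * Y) powr (1/p0)"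
    using K0 Y0 by (simp add: powr_mult[symmetric] mult.left_commute)
  also have "K powr (1/p0) = (if p0 < 1 then 2 powr (1/p0) else 2)"
    using p by (simp add: K_def powr_powr)
  also have "((1/(2*pi)) * Y) powr (1/p0) = Mp p0 f J r" by (simp add: Mp_eq Y_def)
  finally show ?thesis .
qed

lemma Mp_mono:
  assumes ha: "\<forall>q\<in>qball. (\<lambda>n. qmult (qpow q n) (a n)) sums f q" and I: "I \<in> qsphere"
    and p: "0 < p0" and rs: "0 \<le> r" "r \<le> s" "s < 1"
  shows "Mp p0 f I r \<le> Mp p0 f I s"
  unfolding Mp_eq using F_mono[OF ha I p rs] p int_nonneg[of f I r p0]
  by (intro powr_mono2 mult_left_mono) (auto simp del: times_divide_eq_left times_divide_eq_right)

lemma lim_mono: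
  fixes g :: "real \<Rightarrow> real"
  assumes mono: "\<And>r s. 0 \<le> r \<Longrightarrow> r \<le> s \<Longrightarrow> s < 1 \<Longrightarrow> g r \<le> g s"
  shows "((\<lambda>r. ereal (g r)) \<longlongrightarrow> (SUP r\<in>{0..<1}. ereal (g r))) (at_left 1)"
proof (rule order_tendstoI)
  fix y assume "y < (SUP r\<in>{0..<1}. ereal (g r))"
  then obtain r where r: "r \<in> {0..<1}" "y < ereal (g r)" by (auto simp: less_SUP_iff)
  have "eventually (\<lambda>x. x \<in> {r<..<1}) (at_left (1::real))"
    using r by (intro eventually_at_left_real) auto
  then show "eventually (\<lambda>x. y < ereal (g x)) (at_left 1)"
  proof (rule eventually_mono)
    fix x :: real assume "x \<in> {r<..<1}"
    then have "g r \<le> g x" using r by (intro mono) auto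
    then show "y < ereal (g x)" using r by (meson ereal_less_eq(3) order_less_le_trans)
  qed
next
  fix y assume y: "(SUP r\<in>{0..<1}. ereal (g r)) < y"
  have "eventually (\<lambda>x. x \<in> {0<..<1}) (at_left (1::real))"
    by (intro eventually_at_left_real) auto
  then show "eventually (\<lambda>x. ereal (g x) < y) (at_left 1)"
  proof (rule eventually_mono)
    fix x :: real assume "x \<in> {0<..<1}"
    then have "ereal (g x) \<le> (SUP r\<in>{0..<1}. ereal (g r))" by (intro SUP_upper) auto
    then show "ereal (g x) < y" using y by simp
  qed
qed

lemma slice_norm_finite:
  assumes ha: "\<forall>q\<in>qball. (\<lambda>n. qmult (qpow q n) (a n)) sums f q" and I: "I \<in> qsphere" and p: "0 < p0"
  shows "slice_hardy_norm (ereal p0) f I = (SUP r\<in>{0..<1}. ereal (Mp p0 f I r))"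
proof -
  have "((\<lambda>r. ereal (Mp p0 f I r)) \<longlongrightarrow> (SUP r\<in>{0..<1}. ereal (Mp p0 f I r))) (at_left 1)"
    by (rule lim_mono, rule Mp_mono[OF ha I p]) auto
  then show ?thesis
    by (simp add: slice_hardy_norm_def tendsto_Lim trivial_limit_at_left_real)
qed

lemma ereal_twice: "(2::ereal) * x = x + x"
  by (cases x) (auto simp: ereal_mult_left_mono)

lemma main_inf:
  assumes ha: "\<forall>q\<in>qball. (\<lambda>n. qmult (qpow q n) (a n)) sums f q" and J: "J \<in> qsphere"
  shows "slice_hardy_norm \<infinity> f J \<le> hardy_norm \<infinity> f \<and> hardy_norm \<infinity> f \<le> 2 * slice_hardy_norm \<infinity> f J"
proof
  show "slice_hardy_norm \<infinity> f J \<le> hardy_norm \<infinity> f"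
    unfolding slice_hardy_norm_def hardy_norm_def by (auto intro!: SUP_subset_mono)
next
  define S where "S = slice_hardy_norm \<infinity> f J"
  have S: "ereal (norm (f (cq J z))) \<le> S" if "cmod z < 1" for z
  proof -
    have "cq J z \<in> qball \<inter> qslice J" using that norm_cq[OF J] by (auto simp: qball_def qslice_cq)
    then show ?thesis unfolding S_def slice_hardy_norm_def by (auto intro!: SUP_upper)
  qed
  show "hardy_norm \<infinity> f \<le> 2 * slice_hardy_norm \<infinity> f J"
    unfolding hardy_norm_def S_def[symmetric] ereal_twice
  proof (simp, rule SUP_least)
    fix q assume "q \<in> qball"
    obtain I z where I: "I \<in> qsphere" and q: "q = cq I z" using quat_decomp by blast
    have z: "cmod z < 1" using \<open>q \<in> qball\<close> norm_cq[OF I] by (simp add: qball_def q)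
    have "ereal (norm (f q)) \<le> ereal (norm (f (cq J z))) + ereal (norm (f (cq J (cnj z))))"
      using repr_bound[OF ha I J z] by (simp add: q)
    also have "\<dots> \<le> S + S" using S[OF z] S[of "cnj z"] z by (intro add_mono) auto
    finally show "ereal (norm (f q)) \<le> S + S" .
  qed
qed

lemma main_fin:
  assumes ha: "\<forall>q\<in>qball. (\<lambda>n. qmult (qpow q n) (a n)) sums f q" and J: "J \<in> qsphere" and p: "0 < p0"
  shows "slice_hardy_norm (ereal p0) f J \<le> hardy_norm (ereal p0) f \<and>
    hardy_norm (ereal p0) f \<le> ereal (if p0 < 1 then 2 powr (1/p0) else 2) * slice_hardy_norm (ereal p0) f J"
proof
  show "slice_hardy_norm (ereal p0) f J \<le> hardy_norm (ereal p0) f"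
    unfolding hardy_norm_def using J by (auto intro!: SUP_upper)
next
  define c where "c = (if p0 < 1 then 2 powr (1/p0) else (2::real))"
  have c0: "c \<ge> 0" by (simp add: c_def)
  show "hardy_norm (ereal p0) f \<le> ereal (if p0 < 1 then 2 powr (1/p0) else 2) * slice_hardy_norm (ereal p0) f J"
    unfolding c_def[symmetric] hardy_norm_def
  proof (simp, rule SUP_least)
    fix I assume I: "I \<in> qsphere"
    show "slice_hardy_norm (ereal p0) f I \<le> ereal c * slice_hardy_norm (ereal p0) f J"
      unfolding slice_norm_finite[OF ha I p] slice_norm_finite[OF ha J p]
    proof (rule SUP_least)
      fix r assume r: "r \<in> {0..<(1::real)}"
      have "ereal (Mp p0 f I r) \<le> ereal (c * Mp p0 f J r)"
        using Mp_bound[OF ha I J _ p, of r] r by (simp add: c_def)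
      also have "\<dots> = ereal c * ereal (Mp p0 f J r)" by simp
      also have "\<dots> \<le> ereal c * (SUP r\<in>{0..<1}. ereal (Mp p0 f J r))"
        using r c0 by (intro ereal_mult_left_mono SUP_upper) auto
      finally show "ereal (Mp p0 f I r) \<le> ereal c * (SUP r\<in>{0..<1}. ereal (Mp p0 f J r))" .
    qed
  qed
qed

theorem mainTheorem2:
  fixes f :: "quat \<Rightarrow> quat" and p :: ereal
  assumes "slice_regular f" and "0 < p"
  shows "(f \<in> hardy_space p \<longleftrightarrow> (\<exists>J \<in> qsphere. slice_hardy_norm p f J < \<infinity>)) \<and>
         (\<forall>J \<in> qsphere. slice_hardy_norm p f J < \<infinity> \<longrightarrow>
            slice_hardy_norm p f J \<le> hardy_norm p f \<and>
            hardy_norm p f \<le>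
              (if p < 1 then ereal (2 powr (1 / real_of_ereal p)) else 2) * slice_hardy_norm p f J)"
proof -
  obtain a where ha: "\<forall>q\<in>qball. (\<lambda>n. qmult (qpow q n) (a n)) sums f q"
    using assms(1) unfolding slice_regular_def by blast
  define c where "c = (if p < 1 then ereal (2 powr (1 / real_of_ereal p)) else 2)"
  have key: "\<forall>J \<in> qsphere. slice_hardy_norm p f J \<le> hardy_norm p f \<and> hardy_norm p f \<le> c * slice_hardy_norm p f J"
  proof (cases p)
    case (real p0)
    then have p0: "0 < p0" using assms(2) by simp
    have "c = ereal (if p0 < 1 then 2 powr (1/p0) else 2)" by (simp add: c_def real)
    then show ?thesis using main_fin[OF ha _ p0] by (simp add: real)
  next
    case PInf
    then have "c = 2" by (simp add: c_def)
    then show ?thesis using main_inf[OF ha] by (simp add: PInf)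
  next
    case MInf then show ?thesis using assms(2) by simp
  qed
  have cfin: "c < \<infinity>" by (simp add: c_def)
  have c0: "c \<ge> 0" by (simp add: c_def)
  have J0: "qmk 0 1 0 0 \<in> qsphere" by (rule e2_qsphere)
  have "f \<in> hardy_space p \<longleftrightarrow> (\<exists>J \<in> qsphere. slice_hardy_norm p f J < \<infinity>)"
  proof
    assume "f \<in> hardy_space p"
    then have "hardy_norm p f < \<infinity>" by (simp add: hardy_space_def)
    then show "\<exists>J \<in> qsphere. slice_hardy_norm p f J < \<infinity>"
      using key J0 by (meson order_le_less_trans)
  next
    assume "\<exists>J \<in> qsphere. slice_hardy_norm p f J < \<infinity>"
    then obtain J where J: "J \<in> qsphere" "slice_hardy_norm p f J < \<infinity>" by blast
    have "c * slice_hardy_norm p f J < \<infinity>"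
      using cfin J(2) c0 by (cases c; cases "slice_hardy_norm p f J") auto
    then have "hardy_norm p f < \<infinity>" using key J by (meson order_le_less_trans)
    then show "f \<in> hardy_space p" using assms(1) by (simp add: hardy_space_def)
  qed
  then show ?thesis using key unfolding c_def by blast
qed


end
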